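(* For every $n,m\ge1$, the isolation-resilience of a synchronized communication system (SCS) whose communication graph is the $n\times m$ grid communication graph equals $n\cdot m-\min(n,m)-1$.
   Context: Model. A system consists of pairwise disjoint unit circles $C_1,\dots,C_N$ in the plane (trajectories) and a communication range $r>0$. Its communication graph $G$ has vertex set $\{C_1,\dots,C_N\}$, with $C_i,C_j$ adjacent iff the distance between their centres is at most $2+r$; $G$ is assumed connected. Positions on a circle are angles measured from the positive horizontal axis, modulo $2\pi$. For an edge $(i,j)$, the link position $\phi_{ij}$ is the angle of the point of $C_i$ closest to $C_j$. A schedule is a pair $F=(f,g)$ with $f(C_i)\in[0,2\pi)$, $g(C_i)\in\{1,-1\}$ ($1$ = counterclockwise); a robot following it on $C_i$ is at angle $f(C_i)+g(C_i)\cdot2\pi t$ at time $t$. $F$ is a synchronization schedule if $g(C_i)=-g(C_j)$ for every edge $(i,j)$ and robots following $F$ on adjacent $C_i,C_j$ are at $\phi_{ij}$ and $\phi_{ji}$ at exactly the same times. A synchronized communication system (SCS) consists of $N$ robots, initially one on each circle, following a synchronization schedule, with the switching rule: whenever a robot on $C_i$ reaches $\phi_{ij}$ at time $t$ and $C_j$ contains no robot, it instantly passes to $C_j$ and from then on follows the schedule of $C_j$; if $C_j$ contains a robot (then at $\phi_{ji}$), the two meet (exchange information) and each stays on its circle. A partial SCS is obtained by letting some robots leave (possibly at different times); remaining robots never leave. A surviving robot $u$ starves if every time $u$ arrives at a link position $\phi_{ij}$ of its current circle $C_i$, the circle $C_j$ is empty; the system is in starvation state if all surviving robots starve. The isolation-resilience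 of an SCS is the largest number $k$ such that, whichever $k$ robots leave, the system does not fall into starvation state. Grid. The $n\times m$ grid communication graph consists of $nm$ unit circles, circle $(i,j)$ in row $i$ (rows horizontal, row 1 on top) and column $j$ (columns vertical, column 1 on the left), centres on a square lattice, circle $(i,j)$ adjacent exactly to the existing circles $(i\pm1,j)$, $(i,j\pm1)$. *)

theory Defs
  imports Complex_Main
begin

text \<open>Circles of the n x m grid are indexed by cells (i,j), row i in 1..n (row 1 on top),
column j in 1..m (column 1 on the left).  Robots are identified with the circle
on which they start, so robots are also indexed by cells.\<close>

type_synonym cell = "nat \<times> nat"

definition grid :: "nat \<Rightarrow> nat \<Rightarrow> cell set" where
  "grid n m = {1..n} \<times> {1..m}"

definition grid_adj :: "cell \<Rightarrow> cell \<Rightarrow> bool" where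
  "grid_adj c d \<longleftrightarrow>
     (fst c = fst d \<and> (snd d = snd c + 1 \<or> snd c = snd d + 1)) \<or>
     (snd c = snd d \<and> (fst d = fst c + 1 \<or> fst c = fst d + 1))"

text \<open>Link position of circle c towards neighbouring circle d: the angle of the point of
c closest to d, i.e. the direction from the centre of c to the centre of d
(right: 0, up (row above): pi/2, left: pi, down (row below): 3 pi/2).\<close>

definition link_angle :: "cell \<Rightarrow> cell \<Rightarrow> real" where
  "link_angle c d =
     (if fst d = fst c \<and> snd d = snd c + 1 then 0
      else if snd d = snd c \<and> fst c = fst d + 1 then pi / 2
      else if fst d = fst c \<and> snd c = snd d + 1 then pi
      else 3 * pi / 2)"

definition at_angle :: "(cell \<Rightarrow> real) \<Rightarrow> (cell \<Rightarrow> int) \<Rightarrow> cell \<Rightarrow> real \<Rightarrow> real \<Rightarrow> bool" where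
  "at_angle f g c \<phi> t \<longleftrightarrow> (\<exists>k::int. f c + of_int (g c) * 2 * pi * t = \<phi> + 2 * pi * of_int k)"

definition sync_schedule :: "nat \<Rightarrow> nat \<Rightarrow> (cell \<Rightarrow> real) \<Rightarrow> (cell \<Rightarrow> int) \<Rightarrow> bool" where
  "sync_schedule n m f g \<longleftrightarrow>
     (\<forall>c\<in>grid n m. 0 \<le> f c \<and> f c < 2 * pi \<and> (g c = 1 \<or> g c = -1)) \<and>
     (\<forall>c\<in>grid n m. \<forall>d\<in>grid n m. grid_adj c d \<longrightarrow>
        g c = - g d \<and>
        (\<forall>t::real. at_angle f g c (link_angle c d) t \<longleftrightarrow> at_angle f g d (link_angle d c) t))"

definition event_times :: "nat \<Rightarrow> nat \<Rightarrow> (cell \<Rightarrow> real) \<Rightarrow> (cell \<Rightarrow> int) \<Rightarrow> real set" where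
  "event_times n m f g = {t. 0 \<le> t \<and> (\<exists>c\<in>grid n m. \<exists>d\<in>grid n m.
       grid_adj c d \<and> at_angle f g c (link_angle c d) t)}"

primrec ev :: "nat \<Rightarrow> nat \<Rightarrow> (cell \<Rightarrow> real) \<Rightarrow> (cell \<Rightarrow> int) \<Rightarrow> nat \<Rightarrow> real" where
  "ev n m f g 0 = Inf (event_times n m f g)"
| "ev n m f g (Suc k) = Inf {t \<in> event_times n m f g. ev n m f g k < t}"

text \<open>A configuration maps each robot to the circle it currently is on (None: it has left).\<close>

type_synonym config = "cell \<Rightarrow> cell option"

definition occupied :: "nat \<Rightarrow> nat \<Rightarrow> config \<Rightarrow> cell \<Rightarrow> bool" where
  "occupied n m s d \<longleftrightarrow> (\<exists>r\<in>grid n m. s r = Some d)"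

definition moves_to :: "nat \<Rightarrow> nat \<Rightarrow> (cell \<Rightarrow> real) \<Rightarrow> (cell \<Rightarrow> int) \<Rightarrow> real \<Rightarrow> config
    \<Rightarrow> cell \<Rightarrow> cell \<Rightarrow> bool" where
  "moves_to n m f g t s c d \<longleftrightarrow>
     d \<in> grid n m \<and> grid_adj c d \<and> at_angle f g c (link_angle c d) t \<and> \<not> occupied n m s d"

definition step :: "nat \<Rightarrow> nat \<Rightarrow> (cell \<Rightarrow> real) \<Rightarrow> (cell \<Rightarrow> int) \<Rightarrow> real \<Rightarrow> config \<Rightarrow> config" where
  "step n m f g t s = (\<lambda>r. case s r of
       None \<Rightarrow> None
     | Some c \<Rightarrow> (if \<exists>d. moves_to n m f g t s c d
                  then Some (SOME d. moves_to n m f g t s c d) else Some c))"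

definition meet :: "nat \<Rightarrow> nat \<Rightarrow> (cell \<Rightarrow> real) \<Rightarrow> (cell \<Rightarrow> int) \<Rightarrow> real \<Rightarrow> config \<Rightarrow> bool" where
  "meet n m f g t s \<longleftrightarrow>
     (\<exists>c\<in>grid n m. \<exists>d\<in>grid n m. grid_adj c d \<and> at_angle f g c (link_angle c d) t \<and>
        occupied n m s c \<and> occupied n m s d)"

text \<open>Partial SCS: the robots in S leave; robot r \<in> S leaves after event number lv r - 1
and before event number lv r (lv r = 0: before the first event).\<close>

definition remove_left :: "cell set \<Rightarrow> (cell \<Rightarrow> nat) \<Rightarrow> nat \<Rightarrow> config \<Rightarrow> config" where
  "remove_left S lv k s = (\<lambda>r. if r \<in> S \<and> lv r \<le> k then None else s r)"

text \<open>run ... k: configuration just before the switching rule is applied at event ev k.\<close>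

primrec run :: "nat \<Rightarrow> nat \<Rightarrow> (cell \<Rightarrow> real) \<Rightarrow> (cell \<Rightarrow> int) \<Rightarrow> cell set \<Rightarrow> (cell \<Rightarrow> nat)
    \<Rightarrow> nat \<Rightarrow> config" where
  "run n m f g S lv 0 = remove_left S lv 0 (\<lambda>r. if r \<in> grid n m then Some r else None)"
| "run n m f g S lv (Suc k) =
     remove_left S lv (Suc k) (step n m f g (ev n m f g k) (run n m f g S lv k))"

definition starvation :: "nat \<Rightarrow> nat \<Rightarrow> (cell \<Rightarrow> real) \<Rightarrow> (cell \<Rightarrow> int) \<Rightarrow> cell set
    \<Rightarrow> (cell \<Rightarrow> nat) \<Rightarrow> bool" where
  "starvation n m f g S lv \<longleftrightarrow>
     (\<exists>K. \<forall>k\<ge>K. \<not> meet n m f g (ev n m f g k) (run n m f g S lv k))"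

definition resilient_to :: "nat \<Rightarrow> nat \<Rightarrow> (cell \<Rightarrow> real) \<Rightarrow> (cell \<Rightarrow> int) \<Rightarrow> nat \<Rightarrow> bool" where
  "resilient_to n m f g k \<longleftrightarrow>
     (\<forall>S lv. S \<subseteq> grid n m \<and> card S = k \<longrightarrow> \<not> starvation n m f g S lv)"

definition isolation_resilience :: "nat \<Rightarrow> nat \<Rightarrow> (cell \<Rightarrow> real) \<Rightarrow> (cell \<Rightarrow> int) \<Rightarrow> int" where
  "isolation_resilience n m f g =
     (GREATEST k::int. k = -1 \<or> (0 \<le> k \<and> k \<le> int (n * m) \<and> resilient_to n m f g (nat k)))"

end

theory Submission
  imports Defs
begin


definition sw :: "nat \<Rightarrow> nat \<Rightarrow> nat \<Rightarrow> nat" where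
  "sw p N x = (if x mod 2 = p then (if x < N then Suc x else x) else (if 2 \<le> x then x - 1 else x))"

lemma sw_range: "1 \<le> x \<Longrightarrow> x \<le> N \<Longrightarrow> 1 \<le> sw p N x \<and> sw p N x \<le> N"
  unfolding sw_def by auto

lemma sw_up: "x mod 2 = p \<Longrightarrow> x < N \<Longrightarrow> sw p N x = Suc x" unfolding sw_def by auto
lemma sw_down: "x mod 2 \<noteq> p \<Longrightarrow> 2 \<le> x \<Longrightarrow> sw p N x = x - 1" unfolding sw_def by auto
lemma sw_stay: "\<not> (x mod 2 = p \<and> x < N) \<Longrightarrow> \<not> (x mod 2 \<noteq> p \<and> 2 \<le> x) \<Longrightarrow> sw p N x = x" unfolding sw_def by auto

lemma sw_invol: assumes "p < 2" "1 \<le> x" "x \<le> N" shows "sw p N (sw p N x) = x"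
proof (cases "x mod 2 = p \<and> x < N")
  case True
  have "Suc x mod 2 \<noteq> p" using True by presburger
  moreover have "sw p N x = Suc x" using True sw_up[of x p N] by blast
  moreover have "2 \<le> Suc x" using assms(2) by simp
  ultimately have "sw p N (Suc x) = x" using sw_down[of "Suc x" p N] by simp
  then show ?thesis using \<open>sw p N x = Suc x\<close> by simp
next
  case F1: False
  show ?thesis
  proof (cases "x mod 2 \<noteq> p \<and> 2 \<le> x")
    case True
    have pm: "Suc y mod 2 \<noteq> p \<Longrightarrow> y mod 2 = p" for y using assms(1) by presburger
    have "(x - 1) mod 2 = p" using True pm[of "x - 1"] by simp
    moreover have "x - 1 < N" using True assms(3) by linarith
    ultimately have "sw p N (x - 1) = Suc (x - 1)" by (rule sw_up)
    moreover have "sw p N x = x - 1" using True by (intro sw_down) auto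
    ultimately show ?thesis using True by simp
  next
    case False then show ?thesis using F1 sw_stay[of x p N] by simp
  qed
qed

lemma sw_cases: "sw p N x = Suc x \<and> x mod 2 = p \<and> x < N \<or> sw p N x = x \<or> (sw p N x = x - 1 \<and> x mod 2 \<noteq> p \<and> 2 \<le> x)"
  using sw_up[of x p N] sw_down[of x p N] sw_stay[of x p N] by blast

lemma sw_inj: "p < 2 \<Longrightarrow> 1 \<le> x \<Longrightarrow> x \<le> N \<Longrightarrow> 1 \<le> y \<Longrightarrow> y \<le> N \<Longrightarrow> sw p N x = sw p N y \<Longrightarrow> x = y"
  by (metis sw_invol)

lemma sw_order: assumes p: "p < 2" and "1 \<le> x" "x < y" "y \<le> N" "sw p N x \<noteq> y" shows "sw p N x < sw p N y"
proof (cases "y = Suc x")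
  case True
  have a: "sw p N x \<le> x" using sw_cases[of p N x] assms True by auto
  have "sw p N y \<noteq> x"
  proof
    assume "sw p N y = x"
    then have "y mod 2 \<noteq> p" using sw_cases[of p N y] True by auto
    then have "x mod 2 = p" using True p by presburger
    then have "sw p N x = y" using sw_up[of x p N] True assms by auto
    then show False using assms by simp
  qed
  then have "sw p N y > x" using sw_cases[of p N y] True by auto
  then show ?thesis using a by simp
next
  case False
  then have y2: "x + 2 \<le> y" using assms by simp
  have a: "sw p N x \<le> Suc x" using sw_cases[of p N x] by auto
  have b: "sw p N y \<ge> y - 1" using sw_cases[of p N y] by auto
  have "sw p N x \<noteq> sw p N y"
  proof
    assume e: "sw p N x = sw p N y"
    then have "sw p N x = Suc x" "sw p N y = y - 1" "y = x + 2" using a b y2 by auto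
    then have "x mod 2 = p" "y mod 2 \<noteq> p" using sw_cases[of p N x] sw_cases[of p N y] y2 by auto
    then show False using \<open>y = x + 2\<close> by presburger
  qed
  then show ?thesis using a b y2 by simp
qed




lemma oned_range:
  assumes x: "\<And>t. x (Suc t) = sw (pp t) N (x t)" and x0: "1 \<le> x 0" "x 0 \<le> N"
  shows "1 \<le> x t \<and> x t \<le> N"
  by (induction t) (use x0 sw_range x in auto)

lemma oned_reach_right:
  assumes x: "\<And>t. x (Suc t) = sw (pp t) N (x t)" and x0: "1 \<le> x 0" "x 0 \<le> N"
    and pp: "\<And>t. pp t < 2" "\<And>t. pp (Suc t) = 1 - pp t"
  shows "x t mod 2 = pp t \<Longrightarrow> \<exists>t'. x t' = N"
proof (induction "N - x t" arbitrary: t rule: less_induct)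
  case less
  have r: "1 \<le> x t \<and> x t \<le> N" using oned_range[OF x x0] .
  show ?case
  proof (cases "x t = N")
    case True then show ?thesis by blast
  next
    case False
    then have xs: "x (Suc t) = Suc (x t)" using x[of t] less.prems r unfolding sw_def by auto
    have "x (Suc t) mod 2 = pp (Suc t)" using xs less.prems pp[of t] by (simp add: pp(2)) presburger
    moreover have "N - x (Suc t) < N - x t" using xs False r by auto
    ultimately show ?thesis using less.hyps by blast
  qed
qed

lemma oned_reach_left:
  assumes x: "\<And>t. x (Suc t) = sw (pp t) N (x t)" and x0: "1 \<le> x 0" "x 0 \<le> N"
    and pp: "\<And>t. pp t < 2" "\<And>t. pp (Suc t) = 1 - pp t"
  shows "\<exists>t'. x t' mod 2 = pp t'"
proof -
  have "x t mod 2 \<noteq> pp t \<Longrightarrow> \<exists>t'. x t' mod 2 = pp t'" for t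
  proof (induction "x t" arbitrary: t rule: less_induct)
    case less
    have r: "1 \<le> x t \<and> x t \<le> N" using oned_range[OF x x0] .
    show ?case
    proof (cases "2 \<le> x t")
      case True
      then have xs: "x (Suc t) = x t - 1" using x[of t] less.prems r unfolding sw_def by auto
      show ?thesis
      proof (cases "x (Suc t) mod 2 = pp (Suc t)")
        case True then show ?thesis by blast
      next
        case False then show ?thesis using less.hyps[of "Suc t"] xs True by auto
      qed
    next
      case False
      then have x1: "x t = 1" using r by auto
      then have xs: "x (Suc t) = 1" using x[of t] less.prems unfolding sw_def by auto
      have "pp t = 0" using less.prems x1 pp(1)[of t] by auto
      then have "x (Suc t) mod 2 = pp (Suc t)" using xs pp(2)[of t] by simp
      then show ?thesis by blast
    qed
  qed
  then show ?thesis by blast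
qed

lemma oned_reach:
  assumes x: "\<And>t. x (Suc t) = sw (pp t) N (x t)" and x0: "1 \<le> x 0" "x 0 \<le> N"
    and pp: "\<And>t. pp t < 2" "\<And>t. pp (Suc t) = 1 - pp t"
  shows "\<exists>t'. x t' = N"
  using oned_reach_left[OF assms] oned_reach_right[OF assms] by blast

lemma oned_meet_lt:
  assumes x: "\<And>t. x (Suc t) = sw (pp t) N (x t)" and x0: "1 \<le> x 0" "x 0 \<le> N"
    and y: "\<And>t. y (Suc t) = sw (pp t) N (y t)" and y0: "1 \<le> y 0" "y 0 \<le> N"
    and pp: "\<And>t. pp t < 2" "\<And>t. pp (Suc t) = 1 - pp t"
    and lt: "x 0 < y 0"
  shows "\<exists>t. sw (pp t) N (x t) = y t"
proof (rule ccontr)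
  assume "\<not> ?thesis"
  then have ne: "\<And>t. sw (pp t) N (x t) \<noteq> y t" by blast
  have "x t < y t" for t
  proof (induction t)
    case 0 then show ?case using lt by simp
  next
    case (Suc t)
    show ?case using sw_order[OF pp(1) _ Suc _ ne[of t]] oned_range[OF x x0, of t] oned_range[OF y y0, of t] x y
      by simp
  qed
  moreover obtain t where "x t = N" using oned_reach[OF x x0 pp] by blast
  ultimately show False using oned_range[OF y y0, of t] by (metis leD)
qed

lemma oned_meet:
  assumes x: "\<And>t. x (Suc t) = sw (pp t) N (x t)" and x0: "1 \<le> x 0" "x 0 \<le> N"
    and y: "\<And>t. y (Suc t) = sw (pp t) N (y t)" and y0: "1 \<le> y 0" "y 0 \<le> N"
    and pp: "\<And>t. pp t < 2" "\<And>t. pp (Suc t) = 1 - pp t"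
    and ne: "x 0 \<noteq> y 0"
  shows "\<exists>t. sw (pp t) N (x t) = y t"
proof (cases "x 0 < y 0")
  case True then show ?thesis using oned_meet_lt[OF x x0 y y0 pp] by blast
next
  case False
  then have "y 0 < x 0" using ne by simp
  then obtain t where "sw (pp t) N (y t) = x t" using oned_meet_lt[OF y y0 x x0 pp] by blast
  then have "sw (pp t) N (x t) = y t" using sw_invol[OF pp(1)] oned_range[OF y y0, of t] by metis
  then show ?thesis by blast
qed




definition hp :: "int \<Rightarrow> nat" where "hp q = (if q mod 4 = 0 then 1 else 0)"
definition vp :: "int \<Rightarrow> nat" where "vp q = (if q mod 4 = 1 then 0 else 1)"

definition Mat :: "nat \<Rightarrow> nat \<Rightarrow> int \<Rightarrow> cell \<Rightarrow> cell" where
  "Mat n m q c = (if even q then (fst c, sw (hp q) m (snd c)) else (sw (vp q) n (fst c), snd c))"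

definition sg :: "cell \<Rightarrow> int" where "sg c = (if even (fst c + snd c) then 1 else -1)"
definition ee :: "cell \<Rightarrow> int" where "ee c = (if even (snd c) then 1 else 0)"

lemma hp_lt: "hp q < 2" by (simp add: hp_def)
lemma vp_lt: "vp q < 2" by (simp add: vp_def)

lemma Mat_right:
  assumes "Suc j \<le> m" "1 \<le> j"
  shows "Mat n m q (i, j) = (i, Suc j) \<longleftrightarrow> (sg (i,j) * q + 2 * ee (i,j)) mod 4 = 0"
proof -
  have "Mat n m q (i, j) = (i, Suc j) \<longleftrightarrow> even q \<and> sw (hp q) m j = Suc j"
    unfolding Mat_def by auto
  also have "\<dots> \<longleftrightarrow> even q \<and> j mod 2 = hp q"
    using sw_cases[of "hp q" m j] sw_up[of j "hp q" m] assms by auto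
  also have "\<dots> \<longleftrightarrow> (sg (i,j) * q + 2 * ee (i,j)) mod 4 = 0"
    unfolding hp_def sg_def ee_def by (auto; presburger)
  finally show ?thesis .
qed

lemma Mat_left:
  assumes "2 \<le> j"
  shows "Mat n m q (i, j) = (i, j - 1) \<longleftrightarrow> (sg (i,j) * q + 2 * ee (i,j) - 2) mod 4 = 0"
proof -
  have "Mat n m q (i, j) = (i, j - 1) \<longleftrightarrow> even q \<and> sw (hp q) m j = j - 1"
    unfolding Mat_def using assms by auto
  also have "\<dots> \<longleftrightarrow> even q \<and> j mod 2 \<noteq> hp q"
    using sw_cases[of "hp q" m j] sw_down[of j "hp q" m] assms by auto
  also have "\<dots> \<longleftrightarrow> (sg (i,j) * q + 2 * ee (i,j) - 2) mod 4 = 0"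
    unfolding hp_def sg_def ee_def by (auto; presburger)
  finally show ?thesis .
qed

lemma Mat_up:
  assumes "2 \<le> i"
  shows "Mat n m q (i, j) = (i - 1, j) \<longleftrightarrow> (sg (i,j) * q + 2 * ee (i,j) - 1) mod 4 = 0"
proof -
  have "Mat n m q (i, j) = (i - 1, j) \<longleftrightarrow> odd q \<and> sw (vp q) n i = i - 1"
    unfolding Mat_def using assms by auto
  also have "\<dots> \<longleftrightarrow> odd q \<and> i mod 2 \<noteq> vp q"
    using sw_cases[of "vp q" n i] sw_down[of i "vp q" n] assms by auto
  also have "\<dots> \<longleftrightarrow> (sg (i,j) * q + 2 * ee (i,j) - 1) mod 4 = 0"
    unfolding vp_def sg_def ee_def by (auto; presburger)
  finally show ?thesis .
qed

lemma Mat_down: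
  assumes "Suc i \<le> n" "1 \<le> i"
  shows "Mat n m q (i, j) = (Suc i, j) \<longleftrightarrow> (sg (i,j) * q + 2 * ee (i,j) - 3) mod 4 = 0"
proof -
  have "Mat n m q (i, j) = (Suc i, j) \<longleftrightarrow> odd q \<and> sw (vp q) n i = Suc i"
    unfolding Mat_def using assms by auto
  also have "\<dots> \<longleftrightarrow> odd q \<and> i mod 2 = vp q"
    using sw_cases[of "vp q" n i] sw_up[of i "vp q" n] assms by auto
  also have "\<dots> \<longleftrightarrow> (sg (i,j) * q + 2 * ee (i,j) - 3) mod 4 = 0"
    unfolding vp_def sg_def ee_def by (auto; presburger)
  finally show ?thesis .
qed

definition dirn :: "cell \<Rightarrow> cell \<Rightarrow> int" where
  "dirn c d = (if fst d = fst c \<and> snd d = snd c + 1 then 0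
      else if snd d = snd c \<and> fst c = fst d + 1 then 1
      else if fst d = fst c \<and> snd c = snd d + 1 then 2 else 3)"

lemma link_dirn: "link_angle c d = of_int (dirn c d) * pi / 2"
  unfolding link_angle_def dirn_def by auto

lemma Mat_grid: "c \<in> grid n m \<Longrightarrow> Mat n m q c \<in> grid n m"
  unfolding Mat_def grid_def using sw_range by (auto simp: mem_Times_iff)

lemma Mat_invol: "c \<in> grid n m \<Longrightarrow> Mat n m q (Mat n m q c) = c"
  unfolding Mat_def grid_def using sw_invol[OF hp_lt] sw_invol[OF vp_lt] by (auto simp: mem_Times_iff)

lemma Mat_inj: "c \<in> grid n m \<Longrightarrow> d \<in> grid n m \<Longrightarrow> Mat n m q c = Mat n m q d \<Longrightarrow> c = d"
  by (metis Mat_invol)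

lemma Mat_adj: "c \<in> grid n m \<Longrightarrow> Mat n m q c \<noteq> c \<Longrightarrow> grid_adj c (Mat n m q c)"
  unfolding Mat_def grid_adj_def using sw_cases[of "hp q" m "snd c"] sw_cases[of "vp q" n "fst c"]
  by (auto simp: mem_Times_iff)

lemma Mat_dirn:
  assumes c: "c \<in> grid n m" and d: "d \<in> grid n m" and adj: "grid_adj c d"
  shows "Mat n m q c = d \<longleftrightarrow> (sg c * q + 2 * ee c - dirn c d) mod 4 = 0"
proof -
  obtain i j where cij: "c = (i, j)" by force
  obtain i' j' where dij: "d = (i', j')" by force
  have ci: "1 \<le> i" "i \<le> n" "1 \<le> j" "j \<le> m" using c cij unfolding grid_def by auto
  have di: "1 \<le> i'" "i' \<le> n" "1 \<le> j'" "j' \<le> m" using d dij unfolding grid_def by auto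
  consider (R) "i' = i" "j' = Suc j" | (L) "i' = i" "j = Suc j'" | (D) "j' = j" "i' = Suc i" | (U) "j' = j" "i = Suc i'"
    using adj unfolding grid_adj_def cij dij by auto
  then show ?thesis
  proof cases
    case R then show ?thesis using Mat_right[of j m n q i] ci di unfolding cij dij dirn_def by simp
  next
    case L
    then have "(i', j') = (i, j - 1)" by simp
    then show ?thesis using Mat_left[of j n m q i] ci di L unfolding cij dij dirn_def by simp
  next
    case D then show ?thesis using Mat_down[of i n m q j] ci di unfolding cij dij dirn_def by simp
  next
    case U
    then have "(i', j') = (i - 1, j)" by simp
    then show ?thesis using Mat_up[of i n m q j] ci di U unfolding cij dij dirn_def by simp
  qed
qed




lemma at_angle_iff: "at_angle f g c \<phi> t \<longleftrightarrow> (\<exists>k::int. f c + of_int (g c) * 2 * pi * t = \<phi> + 2 * pi * of_int k)"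
  unfolding at_angle_def by simp

lemma edge_rel:
  assumes S: "sync_schedule n m f g" and c: "c \<in> grid n m" and d: "d \<in> grid n m" and adj: "grid_adj c d"
  shows "g d = - g c \<and> (\<exists>k::int. f c + f d = link_angle c d + link_angle d c + 2 * pi * of_int k)"
proof -
  have gc: "g c = 1 \<or> g c = -1" using S c unfolding sync_schedule_def by auto
  have gd: "g c = - g d" and eqv: "\<And>t. at_angle f g c (link_angle c d) t \<longleftrightarrow> at_angle f g d (link_angle d c) t"
    using S c d adj unfolding sync_schedule_def by blast+
  define t where "t = (link_angle c d - f c) / (of_int (g c) * 2 * pi)"
  have gc2: "of_int (g c) * of_int (g c) = (1::real)" using gc by auto
  have "of_int (g c) * 2 * pi * t = link_angle c d - f c"
    using gc unfolding t_def by auto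
  then have "at_angle f g c (link_angle c d) t" unfolding at_angle_def by (intro exI[of _ 0]) simp
  then have "at_angle f g d (link_angle d c) t" using eqv by blast
  then obtain k :: int where k: "f d + of_int (g d) * 2 * pi * t = link_angle d c + 2 * pi * of_int k"
    unfolding at_angle_def by blast
  have "of_int (g d) * 2 * pi * t = - (link_angle c d - f c)"
    using \<open>of_int (g c) * 2 * pi * t = link_angle c d - f c\<close> gd by simp
  then have "f c + f d = link_angle c d + link_angle d c + 2 * pi * of_int k" using k by linarith
  then show ?thesis using gd by auto
qed

definition PP :: "(cell \<Rightarrow> real) \<Rightarrow> (cell \<Rightarrow> int) \<Rightarrow> cell \<Rightarrow> bool" where
  "PP f g c \<longleftrightarrow> g c = g (1,1) * sg c \<and>
     (\<exists>k::int. f c = of_int (sg c) * f (1,1) + pi * of_int (ee c) + 2 * pi * of_int k)"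

lemma sg_h: "sg (i, Suc j) = - sg (i, j)" unfolding sg_def by auto
lemma ee_h: "ee (i, Suc j) = 1 - ee (i, j)" unfolding ee_def by auto
lemma sg_v: "sg (Suc i, j) = - sg (i, j)" unfolding sg_def by auto
lemma ee_v: "ee (Suc i, j) = ee (i, j)" unfolding ee_def by auto

lemma PP_h:
  assumes S: "sync_schedule n m f g" and c: "(i,j) \<in> grid n m" and d: "(i, Suc j) \<in> grid n m"
    and P: "PP f g (i,j)"
  shows "PP f g (i, Suc j)"
proof -
  have adj: "grid_adj (i,j) (i, Suc j)" unfolding grid_adj_def by simp
  obtain k where k: "f (i,j) + f (i, Suc j) = link_angle (i,j) (i, Suc j) + link_angle (i, Suc j) (i,j) + 2 * pi * of_int k"
    and g: "g (i, Suc j) = - g (i,j)"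
    using edge_rel[OF S c d adj] by blast
  have l: "link_angle (i,j) (i, Suc j) + link_angle (i, Suc j) (i,j) = pi" unfolding link_angle_def by simp
  obtain k0 where k0: "f (i,j) = of_int (sg (i,j)) * f (1,1) + pi * of_int (ee (i,j)) + 2 * pi * of_int k0"
    and g0: "g (i,j) = g (1,1) * sg (i,j)" using P unfolding PP_def by blast
  have "f (i, Suc j) = of_int (sg (i, Suc j)) * f (1,1) + pi * of_int (ee (i, Suc j)) + 2 * pi * of_int (k - k0)"
    using k l k0 unfolding sg_h ee_h by (simp add: algebra_simps)
  moreover have "g (i, Suc j) = g (1,1) * sg (i, Suc j)" using g g0 sg_h by simp
  ultimately show ?thesis unfolding PP_def by blast
qed

lemma PP_v:
  assumes S: "sync_schedule n m f g" and c: "(i,j) \<in> grid n m" and d: "(Suc i, j) \<in> grid n m"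
    and P: "PP f g (i,j)"
  shows "PP f g (Suc i, j)"
proof -
  have adj: "grid_adj (i,j) (Suc i, j)" unfolding grid_adj_def by simp
  obtain k where k: "f (i,j) + f (Suc i, j) = link_angle (i,j) (Suc i, j) + link_angle (Suc i, j) (i,j) + 2 * pi * of_int k"
    and g: "g (Suc i, j) = - g (i,j)"
    using edge_rel[OF S c d adj] by blast
  have l: "link_angle (i,j) (Suc i, j) + link_angle (Suc i, j) (i,j) = 2 * pi" unfolding link_angle_def by simp
  obtain k0 where k0: "f (i,j) = of_int (sg (i,j)) * f (1,1) + pi * of_int (ee (i,j)) + 2 * pi * of_int k0"
    and g0: "g (i,j) = g (1,1) * sg (i,j)" using P unfolding PP_def by blast
  have "f (Suc i, j) = of_int (sg (Suc i, j)) * f (1,1) + pi * of_int (ee (Suc i, j)) + 2 * pi * of_int (k + 1 - k0 - ee (i,j))"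
    using k l k0 unfolding sg_v ee_v by (simp add: algebra_simps)
  moreover have "g (Suc i, j) = g (1,1) * sg (Suc i, j)" using g g0 sg_v by simp
  ultimately show ?thesis unfolding PP_def by blast
qed

lemma PP_all:
  assumes S: "sync_schedule n m f g" and c: "c \<in> grid n m"
  shows "PP f g c"
proof -
  have row1: "\<forall>j. 1 \<le> j \<longrightarrow> j \<le> m \<longrightarrow> PP f g (1, j)" if "1 \<le> n"
  proof (intro allI)
    fix j show "1 \<le> j \<longrightarrow> j \<le> m \<longrightarrow> PP f g (1, j)"
    proof (induction j)
      case 0 then show ?case by simp
    next
      case (Suc j)
      show ?case
      proof (intro impI)
        assume "1 \<le> Suc j" "Suc j \<le> m"
        show "PP f g (1, Suc j)"
        proof (cases "j = 0")
          case True
          then show ?thesis unfolding PP_def sg_def ee_def by (auto intro: exI[of _ 0])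
        next
          case False
          then have "PP f g (1, j)" using Suc \<open>Suc j \<le> m\<close> by simp
          moreover have "(1, j) \<in> grid n m" "(1, Suc j) \<in> grid n m"
            using False \<open>Suc j \<le> m\<close> that unfolding grid_def by auto
          ultimately show ?thesis using PP_h[OF S] by blast
        qed
      qed
    qed
  qed
  obtain i j where cij: "c = (i,j)" by force
  have ci: "1 \<le> i" "i \<le> n" "1 \<le> j" "j \<le> m" using c cij unfolding grid_def by auto
  have "\<forall>i. 1 \<le> i \<longrightarrow> i \<le> n \<longrightarrow> PP f g (i, j)"
  proof (intro allI)
    fix i show "1 \<le> i \<longrightarrow> i \<le> n \<longrightarrow> PP f g (i, j)"
    proof (induction i)
      case 0 then show ?case by simp
    next
      case (Suc i)
      show ?case
      proof (intro impI)
        assume "1 \<le> Suc i" "Suc i \<le> n"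
        show "PP f g (Suc i, j)"
        proof (cases "i = 0")
          case True
          then show ?thesis using row1 ci \<open>Suc i \<le> n\<close> by simp
        next
          case False
          then have "PP f g (i, j)" using Suc \<open>Suc i \<le> n\<close> by simp
          moreover have "(i, j) \<in> grid n m" "(Suc i, j) \<in> grid n m"
            using False \<open>Suc i \<le> n\<close> ci unfolding grid_def by auto
          ultimately show ?thesis using PP_v[OF S] by blast
        qed
      qed
    qed
  qed
  then show ?thesis using ci cij by simp
qed

definition theta :: "(cell \<Rightarrow> real) \<Rightarrow> (cell \<Rightarrow> int) \<Rightarrow> real \<Rightarrow> real" where
  "theta f g t = f (1,1) + of_int (g (1,1)) * 2 * pi * t"

lemma sg_cases: "sg c = 1 \<or> sg c = -1" unfolding sg_def by auto

lemma AA: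
  assumes S: "sync_schedule n m f g" and c: "c \<in> grid n m"
  shows "at_angle f g c (of_int L * pi / 2) t \<longleftrightarrow>
     (\<exists>q::int. theta f g t = of_int q * pi / 2 \<and> (sg c * q + 2 * ee c - L) mod 4 = 0)"
proof -
  obtain kc :: int where fc: "f c = of_int (sg c) * f (1,1) + pi * of_int (ee c) + 2 * pi * of_int kc"
    and gc: "g c = g (1,1) * sg c" using PP_all[OF S c] unfolding PP_def by blast
  define \<sigma> where "\<sigma> = (of_int (sg c) :: real)"
  have ss: "\<sigma> * \<sigma> = 1" unfolding \<sigma>_def using sg_cases[of c] by auto
  have key: "f c + of_int (g c) * 2 * pi * t = \<sigma> * theta f g t + pi * of_int (ee c) + 2 * pi * of_int kc"
    unfolding fc gc theta_def \<sigma>_def by (simp add: algebra_simps)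
  show ?thesis
  proof
    assume "at_angle f g c (of_int L * pi / 2) t"
    then obtain k :: int where k: "f c + of_int (g c) * 2 * pi * t = of_int L * pi / 2 + 2 * pi * of_int k"
      unfolding at_angle_def by blast
    define q where "q = sg c * (L + 4 * k - 2 * ee c - 4 * kc)"
    have e1: "\<sigma> * theta f g t = of_int (L + 4 * k - 2 * ee c - 4 * kc) * pi / 2"
      using k key by (simp add: algebra_simps)
    have "theta f g t = (\<sigma> * \<sigma>) * theta f g t" using ss by simp
    also have "\<dots> = \<sigma> * (\<sigma> * theta f g t)" by (simp only: mult.assoc)
    also have "\<dots> = \<sigma> * (of_int (L + 4 * k - 2 * ee c - 4 * kc) * pi / 2)" by (simp only: e1)
    also have "\<dots> = of_int q * pi / 2" unfolding q_def \<sigma>_def by simp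
    finally have "theta f g t = of_int q * pi / 2" .
    moreover have "sg c * q + 2 * ee c - L = 4 * (k - kc)"
      using sg_cases[of c] unfolding q_def by (elim disjE) simp_all
    ultimately show "\<exists>q::int. theta f g t = of_int q * pi / 2 \<and> (sg c * q + 2 * ee c - L) mod 4 = 0"
      by auto
  next
    assume "\<exists>q::int. theta f g t = of_int q * pi / 2 \<and> (sg c * q + 2 * ee c - L) mod 4 = 0"
    then obtain q :: int where q: "theta f g t = of_int q * pi / 2" and md: "(sg c * q + 2 * ee c - L) mod 4 = 0"
      by (elim exE conjE)
    obtain z where z: "sg c * q + 2 * ee c - L = 4 * z" using md by auto
    have z': "\<sigma> * of_int q = of_int L - 2 * of_int (ee c) + 4 * of_int z"
    proof -
      have "of_int (sg c * q + 2 * ee c - L) = (of_int (4 * z) :: real)" using z by simp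
      then show ?thesis unfolding \<sigma>_def by simp
    qed
    have "f c + of_int (g c) * 2 * pi * t = (\<sigma> * of_int q) * pi / 2 + pi * of_int (ee c) + 2 * pi * of_int kc"
      unfolding key q by (simp add: algebra_simps)
    also have "\<dots> = of_int L * pi / 2 + 2 * pi * of_int (z + kc)"
      unfolding z' by (simp add: field_simps)
    finally show "at_angle f g c (of_int L * pi / 2) t" unfolding at_angle_def by blast
  qed
qed




lemma KK:
  assumes S: "sync_schedule n m f g" and c: "c \<in> grid n m" and d: "d \<in> grid n m"
  shows "(grid_adj c d \<and> at_angle f g c (link_angle c d) t) \<longleftrightarrow>
         (\<exists>q::int. theta f g t = of_int q * pi / 2 \<and> Mat n m q c = d \<and> d \<noteq> c)"
proof
  assume a: "grid_adj c d \<and> at_angle f g c (link_angle c d) t"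
  have adj: "grid_adj c d" using a by (rule conjunct1)
  have at: "at_angle f g c (of_int (dirn c d) * pi / 2) t" using a unfolding link_dirn by (rule conjunct2)
  obtain q :: int where q: "theta f g t = of_int q * pi / 2" and md: "(sg c * q + 2 * ee c - dirn c d) mod 4 = 0"
    using iffD1[OF AA[OF S c, of "dirn c d" t] at] by (elim exE conjE)
  have m: "Mat n m q c = d" by (rule iffD2[OF Mat_dirn[OF c d adj] md])
  have ne: "d \<noteq> c" using adj unfolding grid_adj_def by auto
  show "\<exists>q::int. theta f g t = of_int q * pi / 2 \<and> Mat n m q c = d \<and> d \<noteq> c"
    by (rule exI[of _ q]) (intro conjI q m ne)
next
  assume "\<exists>q::int. theta f g t = of_int q * pi / 2 \<and> Mat n m q c = d \<and> d \<noteq> c"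
  then obtain q :: int where q: "theta f g t = of_int q * pi / 2" and md: "Mat n m q c = d" and ne: "d \<noteq> c"
    by (elim exE conjE)
  have adj: "grid_adj c d" using Mat_adj[OF c, of q] md ne by simp
  have mm: "(sg c * q + 2 * ee c - dirn c d) mod 4 = 0" by (rule iffD1[OF Mat_dirn[OF c d adj] md])
  have "at_angle f g c (of_int (dirn c d) * pi / 2) t"
    by (rule iffD2[OF AA[OF S c, of "dirn c d" t]]) (rule exI[of _ q], intro conjI q mm)
  then show "grid_adj c d \<and> at_angle f g c (link_angle c d) t" unfolding link_dirn using adj by simp
qed

lemma q_unique: "(of_int q :: real) * pi / 2 = of_int q' * pi / 2 \<Longrightarrow> q = q'"
  by simp

definition isq :: "(cell \<Rightarrow> real) \<Rightarrow> (cell \<Rightarrow> int) \<Rightarrow> real \<Rightarrow> bool" where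
  "isq f g t \<longleftrightarrow> (\<exists>q::int. theta f g t = of_int q * pi / 2)"

definition qof :: "(cell \<Rightarrow> real) \<Rightarrow> (cell \<Rightarrow> int) \<Rightarrow> real \<Rightarrow> int" where
  "qof f g t = (SOME q::int. theta f g t = of_int q * pi / 2)"

definition Mv :: "nat \<Rightarrow> nat \<Rightarrow> (cell \<Rightarrow> real) \<Rightarrow> (cell \<Rightarrow> int) \<Rightarrow> real \<Rightarrow> cell \<Rightarrow> cell" where
  "Mv n m f g t c = (if isq f g t then Mat n m (qof f g t) c else c)"

lemma qof_eq: "theta f g t = of_int q * pi / 2 \<Longrightarrow> qof f g t = q"
  unfolding qof_def by (rule some_equality) auto

lemma Mv_q: "theta f g t = of_int q * pi / 2 \<Longrightarrow> Mv n m f g t c = Mat n m q c"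
  unfolding Mv_def isq_def using qof_eq by auto

lemma Mv_nq: "\<not> isq f g t \<Longrightarrow> Mv n m f g t c = c"
  unfolding Mv_def by simp

lemma Mv_grid: "c \<in> grid n m \<Longrightarrow> Mv n m f g t c \<in> grid n m"
  unfolding Mv_def using Mat_grid by auto

lemma Mv_invol: "c \<in> grid n m \<Longrightarrow> Mv n m f g t (Mv n m f g t c) = c"
  unfolding Mv_def using Mat_invol by auto

lemma Mv_inj: "c \<in> grid n m \<Longrightarrow> d \<in> grid n m \<Longrightarrow> Mv n m f g t c = Mv n m f g t d \<Longrightarrow> c = d"
  by (metis Mv_invol)

lemma Mv_adj: "c \<in> grid n m \<Longrightarrow> Mv n m f g t c \<noteq> c \<Longrightarrow> grid_adj c (Mv n m f g t c)"
  unfolding Mv_def using Mat_adj by (auto split: if_splits)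

lemma KK':
  assumes S: "sync_schedule n m f g" and c: "c \<in> grid n m" and d: "d \<in> grid n m"
  shows "(grid_adj c d \<and> at_angle f g c (link_angle c d) t) \<longleftrightarrow> (Mv n m f g t c = d \<and> d \<noteq> c)"
  unfolding KK[OF S c d]
proof
  assume "\<exists>q::int. theta f g t = of_int q * pi / 2 \<and> Mat n m q c = d \<and> d \<noteq> c"
  then obtain q :: int where "theta f g t = of_int q * pi / 2" "Mat n m q c = d" "d \<noteq> c" by (elim exE conjE)
  then show "Mv n m f g t c = d \<and> d \<noteq> c" using Mv_q by metis
next
  assume a: "Mv n m f g t c = d \<and> d \<noteq> c"
  then have "isq f g t" using Mv_nq by metis
  then obtain q :: int where q: "theta f g t = of_int q * pi / 2" unfolding isq_def by blast
  then show "\<exists>q::int. theta f g t = of_int q * pi / 2 \<and> Mat n m q c = d \<and> d \<noteq> c"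
    using a Mv_q[OF q] by metis
qed

definition wfc :: "nat \<Rightarrow> nat \<Rightarrow> config \<Rightarrow> bool" where
  "wfc n m s \<longleftrightarrow> (\<forall>r c. s r = Some c \<longrightarrow> r \<in> grid n m \<and> c \<in> grid n m)"

lemma step_none: "s r = None \<Longrightarrow> step n m f g t s r = None"
  unfolding step_def by simp

lemma step_char:
  assumes S: "sync_schedule n m f g" and w: "wfc n m s" and sr: "s r = Some c"
  shows "step n m f g t s r = Some (if Mv n m f g t c \<noteq> c \<and> \<not> occupied n m s (Mv n m f g t c)
                                  then Mv n m f g t c else c)"
proof -
  have c: "c \<in> grid n m" using w sr unfolding wfc_def by blast
  have mt: "moves_to n m f g t s c d \<longleftrightarrow> (Mv n m f g t c = d \<and> d \<noteq> c \<and> \<not> occupied n m s d)" for d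
  proof -
    have "moves_to n m f g t s c d \<longleftrightarrow> d \<in> grid n m \<and> (grid_adj c d \<and> at_angle f g c (link_angle c d) t) \<and> \<not> occupied n m s d"
      unfolding moves_to_def by blast
    also have "\<dots> \<longleftrightarrow> (Mv n m f g t c = d \<and> d \<noteq> c \<and> \<not> occupied n m s d)"
      using KK'[OF S c] Mv_grid[OF c] by blast
    finally show ?thesis .
  qed
  show ?thesis
  proof (cases "Mv n m f g t c \<noteq> c \<and> \<not> occupied n m s (Mv n m f g t c)")
    case True
    then have ex: "\<exists>d. moves_to n m f g t s c d" by (simp add: mt)
    have "(SOME d. moves_to n m f g t s c d) = Mv n m f g t c"
      using mt True by (intro some_equality) auto
    then show ?thesis unfolding step_def using sr ex True by simp
  next
    case False
    then have "\<not> (\<exists>d. moves_to n m f g t s c d)" by (simp add: mt)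
    then show ?thesis unfolding step_def using sr False by auto
  qed
qed

lemma meet_char:
  assumes S: "sync_schedule n m f g"
  shows "meet n m f g t s \<longleftrightarrow> (\<exists>c\<in>grid n m. occupied n m s c \<and> Mv n m f g t c \<noteq> c \<and> occupied n m s (Mv n m f g t c))"
proof
  assume "meet n m f g t s"
  then obtain c d where c: "c \<in> grid n m" and d: "d \<in> grid n m" and adj: "grid_adj c d"
    and at: "at_angle f g c (link_angle c d) t"
    and oc: "occupied n m s c" and od: "occupied n m s d" unfolding meet_def by (elim bexE conjE)
  have "Mv n m f g t c = d \<and> d \<noteq> c" using iffD1[OF KK'[OF S c d] conjI[OF adj at]] .
  then show "\<exists>c\<in>grid n m. occupied n m s c \<and> Mv n m f g t c \<noteq> c \<and> occupied n m s (Mv n m f g t c)"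
    using c oc od by (intro bexI[of _ c]) auto
next
  assume "\<exists>c\<in>grid n m. occupied n m s c \<and> Mv n m f g t c \<noteq> c \<and> occupied n m s (Mv n m f g t c)"
  then obtain c where c: "c \<in> grid n m" and oc: "occupied n m s c" and ne: "Mv n m f g t c \<noteq> c"
    and od: "occupied n m s (Mv n m f g t c)" by (elim bexE conjE)
  have d: "Mv n m f g t c \<in> grid n m" using Mv_grid[OF c] .
  have "grid_adj c (Mv n m f g t c) \<and> at_angle f g c (link_angle c (Mv n m f g t c)) t"
    using iffD2[OF KK'[OF S c d]] ne by simp
  then show "meet n m f g t s" unfolding meet_def using c d oc od by (intro bexI[of _ c] bexI[of _ "Mv n m f g t c"]) auto
qed




definition Inv :: "nat \<Rightarrow> nat \<Rightarrow> config \<Rightarrow> bool" where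
  "Inv n m s \<longleftrightarrow> wfc n m s \<and>
     (\<forall>r1 r2 c1 c2. r1 \<noteq> r2 \<and> s r1 = Some c1 \<and> s r2 = Some c2 \<longrightarrow> fst c1 \<noteq> fst c2 \<and> snd c1 \<noteq> snd c2)"

lemma wfD: assumes "wfc n m s" "s r = Some c" shows "r \<in> grid n m \<and> c \<in> grid n m"
  using spec[OF spec[OF assms(1)[unfolded wfc_def], of r], of c] assms(2) by (rule mp)

lemma InvD: assumes "Inv n m s" "r1 \<noteq> r2" "s r1 = Some c1" "s r2 = Some c2"
  shows "fst c1 \<noteq> fst c2 \<and> snd c1 \<noteq> snd c2"
proof -
  have "\<forall>r1 r2 c1 c2. r1 \<noteq> r2 \<and> s r1 = Some c1 \<and> s r2 = Some c2 \<longrightarrow> fst c1 \<noteq> fst c2 \<and> snd c1 \<noteq> snd c2"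
    using assms(1) unfolding Inv_def by (rule conjunct2)
  then show ?thesis using assms(2-4) by (elim allE[of _ r1] allE[of _ r2] allE[of _ c1] allE[of _ c2]) simp
qed

lemma Inv_wf: "Inv n m s \<Longrightarrow> wfc n m s" unfolding Inv_def by (rule conjunct1)

lemma adj_rowcol: "grid_adj c d \<Longrightarrow> fst c = fst d \<or> snd c = snd d"
  unfolding grid_adj_def by auto

lemma inv_nooccmv:
  assumes I: "Inv n m s" and sr: "s r = Some c" and ne: "Mv n m f g t c \<noteq> c"
  shows "\<not> occupied n m s (Mv n m f g t c)"
proof
  assume "occupied n m s (Mv n m f g t c)"
  then obtain r2 where r2: "s r2 = Some (Mv n m f g t c)" unfolding occupied_def by blast
  have c: "c \<in> grid n m" using wfD[OF Inv_wf[OF I] sr] by (rule conjunct2)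
  have "r \<noteq> r2" using sr r2 ne by auto
  have "fst c \<noteq> fst (Mv n m f g t c) \<and> snd c \<noteq> snd (Mv n m f g t c)"
    by (rule InvD[OF I \<open>r \<noteq> r2\<close> sr r2])
  moreover have "grid_adj c (Mv n m f g t c)" using Mv_adj[OF c ne] .
  ultimately show False using adj_rowcol by blast
qed

lemma inv_nomeet:
  assumes S: "sync_schedule n m f g" and I: "Inv n m s"
  shows "\<not> meet n m f g t s"
proof
  assume "meet n m f g t s"
  then obtain c where c: "c \<in> grid n m" and oc: "occupied n m s c" and ne: "Mv n m f g t c \<noteq> c"
    and od: "occupied n m s (Mv n m f g t c)" unfolding meet_char[OF S] by (elim bexE conjE)
  obtain r where r: "s r = Some c" using oc unfolding occupied_def by blast
  show False using inv_nooccmv[OF I r ne] od by blast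
qed

lemma inv_step_eq:
  assumes S: "sync_schedule n m f g" and I: "Inv n m s"
  shows "step n m f g t s r = map_option (Mv n m f g t) (s r)"
proof (cases "s r")
  case None then show ?thesis using step_none by simp
next
  case (Some c)
  have w: "wfc n m s" by (rule Inv_wf[OF I])
  show ?thesis
  proof (cases "Mv n m f g t c = c")
    case True then show ?thesis using step_char[OF S w Some] Some by simp
  next
    case False
    then show ?thesis using step_char[OF S w Some] Some inv_nooccmv[OF I Some False] by simp
  qed
qed

lemma Mat_rowcol:
  assumes c1: "c1 \<in> grid n m" and c2: "c2 \<in> grid n m" and d: "fst c1 \<noteq> fst c2 \<and> snd c1 \<noteq> snd c2"
  shows "fst (Mat n m q c1) \<noteq> fst (Mat n m q c2) \<and> snd (Mat n m q c1) \<noteq> snd (Mat n m q c2)"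
proof -
  have r: "1 \<le> fst c1" "fst c1 \<le> n" "1 \<le> snd c1" "snd c1 \<le> m" "1 \<le> fst c2" "fst c2 \<le> n" "1 \<le> snd c2" "snd c2 \<le> m"
    using c1 c2 unfolding grid_def by (auto simp: mem_Times_iff)
  show ?thesis unfolding Mat_def using d r sw_inj[OF hp_lt] sw_inj[OF vp_lt] by auto
qed

lemma Mv_rowcol:
  assumes c1: "c1 \<in> grid n m" and c2: "c2 \<in> grid n m" and d: "fst c1 \<noteq> fst c2 \<and> snd c1 \<noteq> snd c2"
  shows "fst (Mv n m f g t c1) \<noteq> fst (Mv n m f g t c2) \<and> snd (Mv n m f g t c1) \<noteq> snd (Mv n m f g t c2)"
  unfolding Mv_def using Mat_rowcol[OF c1 c2 d] d by auto

lemma inv_step: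
  assumes S: "sync_schedule n m f g" and I: "Inv n m s"
  shows "Inv n m (step n m f g t s)"
proof -
  have e: "\<And>r. step n m f g t s r = map_option (Mv n m f g t) (s r)" using inv_step_eq[OF S I] .
  have w: "wfc n m s" by (rule Inv_wf[OF I])
  have w2: "\<And>r c. s r = Some c \<Longrightarrow> r \<in> grid n m \<and> c \<in> grid n m" by (rule wfD[OF w])
  have "wfc n m (step n m f g t s)" unfolding wfc_def e
  proof (intro allI impI)
    fix r c assume "map_option (Mv n m f g t) (s r) = Some c"
    then obtain d where "s r = Some d" "c = Mv n m f g t d" by auto
    then show "r \<in> grid n m \<and> c \<in> grid n m" using w2 Mv_grid by metis
  qed
  moreover have "\<forall>r1 r2 c1 c2. r1 \<noteq> r2 \<and> step n m f g t s r1 = Some c1 \<and> step n m f g t s r2 = Some c2 \<longrightarrow> fst c1 \<noteq> fst c2 \<and> snd c1 \<noteq> snd c2"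
  proof (intro allI impI)
    fix r1 r2 c1 c2 assume a: "r1 \<noteq> r2 \<and> step n m f g t s r1 = Some c1 \<and> step n m f g t s r2 = Some c2"
    then obtain d1 d2 where d1: "s r1 = Some d1" "c1 = Mv n m f g t d1" and d2: "s r2 = Some d2" "c2 = Mv n m f g t d2"
      unfolding e by auto
    have g1: "d1 \<in> grid n m" "d2 \<in> grid n m" using w2 d1 d2 by metis+
    have inj: "\<And>r1 r2 c1 c2. r1 \<noteq> r2 \<Longrightarrow> s r1 = Some c1 \<Longrightarrow> s r2 = Some c2 \<Longrightarrow> fst c1 \<noteq> fst c2 \<and> snd c1 \<noteq> snd c2"
      by (rule InvD[OF I])
    have "fst d1 \<noteq> fst d2 \<and> snd d1 \<noteq> snd d2" using inj[OF _ d1(1) d2(1)] a by simp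
    then show "fst c1 \<noteq> fst c2 \<and> snd c1 \<noteq> snd c2" using Mv_rowcol[OF g1] d1 d2 by simp
  qed
  ultimately show ?thesis unfolding Inv_def by blast
qed

lemma remove_some: "remove_left S lv k s r = Some c \<Longrightarrow> s r = Some c"
  unfolding remove_left_def by (simp split: if_splits)

lemma inv_remove: assumes "Inv n m s" shows "Inv n m (remove_left S lv k s)"
proof -
  have a: "\<And>r c. s r = Some c \<Longrightarrow> r \<in> grid n m \<and> c \<in> grid n m" by (rule wfD[OF Inv_wf[OF assms]])
  have b: "\<And>r1 r2 c1 c2. r1 \<noteq> r2 \<Longrightarrow> s r1 = Some c1 \<Longrightarrow> s r2 = Some c2 \<Longrightarrow> fst c1 \<noteq> fst c2 \<and> snd c1 \<noteq> snd c2"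
    by (rule InvD[OF assms])
  have "wfc n m (remove_left S lv k s)" unfolding wfc_def
  proof (intro allI impI)
    fix r c assume "remove_left S lv k s r = Some c"
    then have "s r = Some c" by (rule remove_some)
    then show "r \<in> grid n m \<and> c \<in> grid n m" by (rule a)
  qed
  moreover have "\<forall>r1 r2 c1 c2. r1 \<noteq> r2 \<and> remove_left S lv k s r1 = Some c1 \<and> remove_left S lv k s r2 = Some c2 \<longrightarrow> fst c1 \<noteq> fst c2 \<and> snd c1 \<noteq> snd c2"
  proof (intro allI impI)
    fix r1 r2 c1 c2 assume h: "r1 \<noteq> r2 \<and> remove_left S lv k s r1 = Some c1 \<and> remove_left S lv k s r2 = Some c2"
    have x1: "s r1 = Some c1" using h remove_some[of S lv k s r1 c1] by simp
    have x2: "s r2 = Some c2" using h remove_some[of S lv k s r2 c2] by simp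
    have ne: "r1 \<noteq> r2" using h by simp
    show "fst c1 \<noteq> fst c2 \<and> snd c1 \<noteq> snd c2" by (rule b[OF ne x1 x2])
  qed
  ultimately show ?thesis unfolding Inv_def by (intro conjI)
qed




definition Dg :: "nat \<Rightarrow> nat \<Rightarrow> cell set" where "Dg n m = (\<lambda>i. (i, i)) ` {1..min n m}"

lemma Dg_sub: "Dg n m \<subseteq> grid n m" unfolding Dg_def grid_def by auto

lemma card_Dg: "card (Dg n m) = min n m"
proof -
  have "inj_on (\<lambda>i::nat. (i, i)) {1..min n m}" by (auto simp: inj_on_def)
  then show ?thesis unfolding Dg_def by (simp add: card_image)
qed

lemma card_grid: "card (grid n m) = n * m" unfolding grid_def by (simp add: card_cartesian_product)

lemma finite_grid: "finite (grid n m)" unfolding grid_def by simp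

lemma run0_inv:
  assumes D: "D' \<subseteq> Dg n m"
  shows "Inv n m (run n m f g (grid n m - D') (\<lambda>_. 0) 0)"
proof -
  let ?s = "run n m f g (grid n m - D') (\<lambda>_. 0) 0"
  have e: "?s r = Some c \<longleftrightarrow> r \<in> D' \<and> c = r" for r c
    using D Dg_sub[of n m] by (auto simp: remove_left_def split: if_splits)
  have "wfc n m ?s" unfolding wfc_def
  proof (intro allI impI)
    fix r c assume "?s r = Some c"
    then have "r \<in> D' \<and> c = r" using e by blast
    then show "r \<in> grid n m \<and> c \<in> grid n m" using D Dg_sub by auto
  qed
  moreover have "\<forall>r1 r2 c1 c2. r1 \<noteq> r2 \<and> ?s r1 = Some c1 \<and> ?s r2 = Some c2 \<longrightarrow> fst c1 \<noteq> fst c2 \<and> snd c1 \<noteq> snd c2"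
  proof (intro allI impI)
    fix r1 r2 c1 c2 assume h: "r1 \<noteq> r2 \<and> ?s r1 = Some c1 \<and> ?s r2 = Some c2"
    then have "r1 \<in> D' \<and> c1 = r1" "r2 \<in> D' \<and> c2 = r2" using e by blast+
    then have "r1 \<in> Dg n m" "r2 \<in> Dg n m" "c1 = r1" "c2 = r2" using D by auto
    then show "fst c1 \<noteq> fst c2 \<and> snd c1 \<noteq> snd c2" using h unfolding Dg_def by auto
  qed
  ultimately show ?thesis unfolding Inv_def by (intro conjI)
qed

lemma run_inv:
  assumes S: "sync_schedule n m f g" and D: "D' \<subseteq> Dg n m"
  shows "Inv n m (run n m f g (grid n m - D') (\<lambda>_. 0) k)"
proof (induction k)
  case 0 then show ?case using run0_inv[OF D] .
next
  case (Suc k)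
  then show ?case by (simp add: inv_remove inv_step[OF S])
qed

lemma UB:
  assumes S: "sync_schedule n m f g" and k1: "n * m - min n m \<le> k" and k2: "k \<le> n * m"
  shows "\<not> resilient_to n m f g k"
proof -
  have nat_sub_swap: "\<And>a b c::nat. a - b \<le> c \<Longrightarrow> a - c \<le> b" by linarith
  have "n * m - k \<le> min n m" using nat_sub_swap[OF k1] .
  then have "n * m - k \<le> card (Dg n m)" using card_Dg[of n m] by simp
  then obtain D' where D': "D' \<subseteq> Dg n m" "card D' = n * m - k"
    using obtain_subset_with_card_n[of "n * m - k" "Dg n m"] by blast
  have fD: "finite D'" using finite_subset[OF D'(1) finite_subset[OF Dg_sub finite_grid]] .
  have sub: "D' \<subseteq> grid n m" using D'(1) Dg_sub[of n m] by (rule subset_trans)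
  have cS: "card (grid n m - D') = k"
    using card_Diff_subset[OF fD sub] D'(2) card_grid[of n m] k2 by simp
  have "starvation n m f g (grid n m - D') (\<lambda>_. 0)"
    unfolding starvation_def using inv_nomeet[OF S run_inv[OF S D'(1)]] by (intro exI[of _ 0]) simp
  moreover have "grid n m - D' \<subseteq> grid n m" by blast
  ultimately show ?thesis unfolding resilient_to_def using cS by auto
qed




lemma ET_iff:
  assumes S: "sync_schedule n m f g"
  shows "t \<in> event_times n m f g \<longleftrightarrow> 0 \<le> t \<and> (\<exists>c\<in>grid n m. Mv n m f g t c \<noteq> c)"
proof
  assume "t \<in> event_times n m f g"
  then obtain c d where t: "0 \<le> t" and c: "c \<in> grid n m" and d: "d \<in> grid n m"
    and a: "grid_adj c d" and b: "at_angle f g c (link_angle c d) t"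
    unfolding event_times_def by blast
  have "Mv n m f g t c = d \<and> d \<noteq> c" using iffD1[OF KK'[OF S c d] conjI[OF a b]] .
  then show "0 \<le> t \<and> (\<exists>c\<in>grid n m. Mv n m f g t c \<noteq> c)" using t c by auto
next
  assume "0 \<le> t \<and> (\<exists>c\<in>grid n m. Mv n m f g t c \<noteq> c)"
  then obtain c where t: "0 \<le> t" and c: "c \<in> grid n m" and ne: "Mv n m f g t c \<noteq> c" by blast
  have d: "Mv n m f g t c \<in> grid n m" by (rule Mv_grid[OF c])
  have "grid_adj c (Mv n m f g t c) \<and> at_angle f g c (link_angle c (Mv n m f g t c)) t"
    using iffD2[OF KK'[OF S c d]] ne by simp
  then show "t \<in> event_times n m f g" unfolding event_times_def using t c d by blast
qed

lemma ET_isq: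
  assumes S: "sync_schedule n m f g" and t: "t \<in> event_times n m f g"
  shows "isq f g t"
proof (rule ccontr)
  assume "\<not> isq f g t"
  then have "\<And>c. Mv n m f g t c = c" by (rule Mv_nq)
  then show False using t ET_iff[OF S] by simp
qed

lemma g11: "sync_schedule n m f g \<Longrightarrow> 1 \<le> n \<Longrightarrow> 1 \<le> m \<Longrightarrow> g (1,1) = 1 \<or> g (1,1) = -1"
  unfolding sync_schedule_def grid_def by auto

lemma isq_diff:
  assumes s: "g (1,1) = 1 \<or> g (1,1) = -1"
    and q: "theta f g t = of_int q * pi / 2" and q': "theta f g t' = of_int q' * pi / 2"
  shows "t' - t = of_int (g (1,1) * (q' - q)) / 4"
proof -
  have "of_int (g (1,1)) * 2 * pi * (t' - t) = (of_int q' - of_int q) * pi / 2"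
    using q q' unfolding theta_def by (simp add: algebra_simps)
  then have e: "of_int (g (1,1)) * (t' - t) * (2 * pi) = (of_int q' - of_int q) / 4 * (2 * pi)"
    by (simp add: algebra_simps)
  have "of_int (g (1,1)) * (t' - t) = (of_int q' - of_int q) / 4"
    using e pi_gt_zero by (simp add: mult_right_cancel)
  then show ?thesis using s by (elim disjE) (simp_all add: algebra_simps)
qed

lemma theta_shift: "theta f g (t + x) = theta f g t + of_int (g (1,1)) * 2 * pi * x"
  unfolding theta_def by (simp add: algebra_simps)

lemma Mat_period: "Mat n m (q + 4 * z) = Mat n m q"
proof -
  have "even (q + 4 * z) \<longleftrightarrow> even q" by presburger
  moreover have "(q + 4 * z) mod 4 = q mod 4" by presburger
  ultimately show ?thesis unfolding Mat_def hp_def vp_def by (simp add: fun_eq_iff)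
qed

lemma ET_period:
  assumes S: "sync_schedule n m f g" and s: "g (1,1) = 1 \<or> g (1,1) = -1" and t: "t \<in> event_times n m f g"
  shows "t + 1 \<in> event_times n m f g"
proof -
  obtain q where q: "theta f g t = of_int q * pi / 2" using ET_isq[OF S t] unfolding isq_def by blast
  have q1: "theta f g (t + 1) = of_int (q + 4 * g (1,1)) * pi / 2"
    unfolding theta_shift q by (simp add: algebra_simps)
  have "Mv n m f g (t + 1) c = Mv n m f g t c" for c
    unfolding Mv_q[OF q1] Mv_q[OF q] Mat_period ..
  then show ?thesis using t ET_iff[OF S] by simp
qed

lemma Inf_quarter:
  fixes X :: "real set"
  assumes x0: "x0 \<in> X" and lb: "\<And>x. x \<in> X \<Longrightarrow> lb \<le> x" and qz: "\<And>x. x \<in> X \<Longrightarrow> \<exists>z::int. x = b + of_int z / 4"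
  shows "Inf X \<in> X \<and> (\<forall>x\<in>X. Inf X \<le> x)"
proof -
  define Y where "Y = {x \<in> X. x \<le> x0}"
  have "Y \<subseteq> (\<lambda>z::int. b + of_int z / 4) ` {\<lfloor>4 * (lb - b)\<rfloor> .. \<lceil>4 * (x0 - b)\<rceil>}"
  proof
    fix x assume "x \<in> Y"
    then have xX: "x \<in> X" and xle: "x \<le> x0" unfolding Y_def by auto
    obtain z :: int where z: "x = b + of_int z / 4" using qz[OF xX] by blast
    have "lb \<le> x" using lb[OF xX] .
    then have "4 * (lb - b) \<le> of_int z" using z by simp
    then have z1: "\<lfloor>4 * (lb - b)\<rfloor> \<le> z" by linarith
    have "of_int z \<le> 4 * (x0 - b)" using xle z by simp
    then have z2: "z \<le> \<lceil>4 * (x0 - b)\<rceil>" by linarith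
    show "x \<in> (\<lambda>z::int. b + of_int z / 4) ` {\<lfloor>4 * (lb - b)\<rfloor> .. \<lceil>4 * (x0 - b)\<rceil>}"
      using z z1 z2 by auto
  qed
  then have fY: "finite Y" by (rule finite_subset) simp
  have Yne: "Y \<noteq> {}" using x0 unfolding Y_def by auto
  define y where "y = Min Y"
  have yY: "y \<in> Y" unfolding y_def using fY Yne by (rule Min_in)
  have ymin: "\<forall>x\<in>X. y \<le> x"
  proof
    fix x assume xX: "x \<in> X"
    show "y \<le> x"
    proof (cases "x \<le> x0")
      case True then have "x \<in> Y" unfolding Y_def using xX by simp
      then show ?thesis unfolding y_def using fY by simp
    next
      case False
      have "y \<le> x0" using yY unfolding Y_def by simp
      then show ?thesis using False by simp
    qed
  qed
  have "Inf X = y" using yY ymin unfolding Y_def by (intro cInf_eq_minimum) auto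
  then show ?thesis using yY ymin unfolding Y_def by auto
qed

lemma ET_quarter:
  assumes S: "sync_schedule n m f g" and s: "g (1,1) = 1 \<or> g (1,1) = -1"
    and e: "e \<in> event_times n m f g" and t: "t \<in> event_times n m f g"
  shows "\<exists>z::int. t = e + of_int z / 4"
proof -
  obtain q where q: "theta f g e = of_int q * pi / 2" using ET_isq[OF S e] unfolding isq_def by blast
  obtain q' where q': "theta f g t = of_int q' * pi / 2" using ET_isq[OF S t] unfolding isq_def by blast
  have "t - e = of_int (g (1,1) * (q' - q)) / 4" by (rule isq_diff[OF s q q'])
  then show ?thesis by (intro exI[of _ "g (1,1) * (q' - q)"]) simp
qed

lemma ev_next:
  assumes S: "sync_schedule n m f g" and s: "g (1,1) = 1 \<or> g (1,1) = -1" and e: "e \<in> event_times n m f g"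
  shows "Inf {t \<in> event_times n m f g. e < t} \<in> event_times n m f g \<and> e < Inf {t \<in> event_times n m f g. e < t}
    \<and> (\<forall>t\<in>event_times n m f g. e < t \<longrightarrow> Inf {t \<in> event_times n m f g. e < t} \<le> t)"
proof -
  let ?X = "{t \<in> event_times n m f g. e < t}"
  have x0: "e + 1 \<in> ?X" using ET_period[OF S s e] by simp
  have "Inf ?X \<in> ?X \<and> (\<forall>x\<in>?X. Inf ?X \<le> x)"
    by (rule Inf_quarter[OF x0, of e e]) (auto intro: ET_quarter[OF S s e])
  then show ?thesis by auto
qed

lemma ev_first:
  assumes S: "sync_schedule n m f g" and s: "g (1,1) = 1 \<or> g (1,1) = -1" and e: "e \<in> event_times n m f g"
  shows "Inf (event_times n m f g) \<in> event_times n m f g \<and> (\<forall>t\<in>event_times n m f g. Inf (event_times n m f g) \<le> t)"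
proof (rule Inf_quarter[OF e, of 0 e])
  fix x assume "x \<in> event_times n m f g"
  then show "0 \<le> x" unfolding event_times_def by blast
next
  fix x assume "x \<in> event_times n m f g"
  then show "\<exists>z::int. x = e + of_int z / 4" by (rule ET_quarter[OF S s e])
qed

lemma ev_in:
  assumes S: "sync_schedule n m f g" and s: "g (1,1) = 1 \<or> g (1,1) = -1" and e: "e \<in> event_times n m f g"
  shows "ev n m f g k \<in> event_times n m f g"
proof (induction k)
  case 0 then show ?case using ev_first[OF S s e] by simp
next
  case (Suc k) then show ?case using ev_next[OF S s Suc] by simp
qed

lemma ev_lt:
  assumes S: "sync_schedule n m f g" and s: "g (1,1) = 1 \<or> g (1,1) = -1" and e: "e \<in> event_times n m f g"
  shows "ev n m f g k < ev n m f g (Suc k)"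
  using ev_next[OF S s ev_in[OF S s e, of k]] by simp

lemma ev_min:
  assumes S: "sync_schedule n m f g" and s: "g (1,1) = 1 \<or> g (1,1) = -1" and e: "e \<in> event_times n m f g"
    and t: "t \<in> event_times n m f g" and lt: "ev n m f g k < t"
  shows "ev n m f g (Suc k) \<le> t"
  using ev_next[OF S s ev_in[OF S s e, of k]] t lt by simp

lemma exists_at:
  assumes S: "sync_schedule n m f g" and c: "c \<in> grid n m"
  shows "\<exists>t\<ge>0. at_angle f g c \<phi> t"
proof -
  have gc: "g c = 1 \<or> g c = -1" using S c unfolding sync_schedule_def by auto
  define t0 where "t0 = (\<phi> - f c) / (of_int (g c) * 2 * pi)"
  have e0: "of_int (g c) * 2 * pi * t0 = \<phi> - f c" using gc unfolding t0_def by auto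
  define N where "N = nat \<lceil>- t0\<rceil>"
  have N: "0 \<le> t0 + of_nat N" unfolding N_def by linarith
  have "f c + of_int (g c) * 2 * pi * (t0 + of_nat N) = \<phi> + 2 * pi * of_int (g c * int N)"
    using e0 by (simp add: algebra_simps)
  then have "at_angle f g c \<phi> (t0 + of_nat N)" unfolding at_angle_def by blast
  then show ?thesis using N by blast
qed

lemma ET_nonempty:
  assumes S: "sync_schedule n m f g" and n: "1 \<le> n" and m: "1 \<le> m" and nm: "\<not> (n = 1 \<and> m = 1)"
  shows "\<exists>e. e \<in> event_times n m f g"
proof -
  obtain c d where c: "c \<in> grid n m" and d: "d \<in> grid n m" and a: "grid_adj c d"
  proof (cases "2 \<le> m")
    case True
    then show ?thesis using that[of "(1,1)" "(1,2)"] n unfolding grid_def grid_adj_def by auto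
  next
    case False
    then have "2 \<le> n" "m = 1" using nm n m by auto
    then show ?thesis using that[of "(1,1)" "(2,1)"] unfolding grid_def grid_adj_def by auto
  qed
  obtain t where t: "0 \<le> t" "at_angle f g c (link_angle c d) t" using exists_at[OF S c] by blast
  then have "t \<in> event_times n m f g" unfolding event_times_def using c d a by blast
  then show ?thesis by blast
qed




primrec lone :: "nat \<Rightarrow> nat \<Rightarrow> int \<Rightarrow> int \<Rightarrow> cell \<Rightarrow> nat \<Rightarrow> cell" where
  "lone n m q0 s0 c 0 = c"
| "lone n m q0 s0 c (Suc j) = Mat n m (q0 + s0 * int j) (lone n m q0 s0 c j)"

lemma lone_grid: "c \<in> grid n m \<Longrightarrow> lone n m q0 s0 c j \<in> grid n m"
  by (induction j) (simp_all add: Mat_grid)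

lemma lone_inj: "c1 \<in> grid n m \<Longrightarrow> c2 \<in> grid n m \<Longrightarrow> c1 \<noteq> c2 \<Longrightarrow> lone n m q0 s0 c1 j \<noteq> lone n m q0 s0 c2 j"
proof (induction j)
  case 0 then show ?case by simp
next
  case (Suc j)
  then have "lone n m q0 s0 c1 j \<noteq> lone n m q0 s0 c2 j" by simp
  then show ?case using Mat_inj[OF lone_grid[OF Suc.prems(1)] lone_grid[OF Suc.prems(2)]] by auto
qed

lemma Mat_fst_even: "even q \<Longrightarrow> fst (Mat n m q c) = fst c" unfolding Mat_def by simp
lemma Mat_snd_even: "even q \<Longrightarrow> snd (Mat n m q c) = sw (hp q) m (snd c)" unfolding Mat_def by simp
lemma Mat_fst_odd: "odd q \<Longrightarrow> fst (Mat n m q c) = sw (vp q) n (fst c)" unfolding Mat_def by simp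
lemma Mat_snd_odd: "odd q \<Longrightarrow> snd (Mat n m q c) = snd c" unfolding Mat_def by simp

lemma lone_row: "fst c1 = fst c2 \<Longrightarrow> fst (lone n m q0 s0 c1 j) = fst (lone n m q0 s0 c2 j)"
proof (induction j)
  case 0 then show ?case by simp
next
  case (Suc j)
  show ?case
  proof (cases "even (q0 + s0 * int j)")
    case True then show ?thesis using Suc by (simp add: Mat_fst_even)
  next
    case False then show ?thesis using Suc by (simp add: Mat_fst_odd)
  qed
qed

lemma lone_col: "snd c1 = snd c2 \<Longrightarrow> snd (lone n m q0 s0 c1 j) = snd (lone n m q0 s0 c2 j)"
proof (induction j)
  case 0 then show ?case by simp
next
  case (Suc j)
  show ?case
  proof (cases "even (q0 + s0 * int j)")
    case True then show ?thesis using Suc by (simp add: Mat_snd_even)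
  next
    case False then show ?thesis using Suc by (simp add: Mat_snd_odd)
  qed
qed

lemma hp_alt: assumes "even q" "s0 = 1 \<or> s0 = -1" shows "hp (q + 2 * s0) = 1 - hp q"
proof -
  have "(q + 2 * s0) mod 4 = 0 \<longleftrightarrow> \<not> (q mod 4 = 0)"
    using assms by (elim disjE) (presburger, presburger)
  then show ?thesis unfolding hp_def by simp
qed

lemma vp_alt: assumes "odd q" "s0 = 1 \<or> s0 = -1" shows "vp (q + 2 * s0) = 1 - vp q"
proof -
  have "(q + 2 * s0) mod 4 = 1 \<longleftrightarrow> \<not> (q mod 4 = 1)"
    using assms by (elim disjE) (presburger, presburger)
  then show ?thesis unfolding vp_def by simp
qed

lemma TR_row:
  assumes s0: "s0 = 1 \<or> s0 = -1" and c1: "c1 \<in> grid n m" and c2: "c2 \<in> grid n m"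
    and ne: "c1 \<noteq> c2" and row: "fst c1 = fst c2"
  shows "\<exists>j. Mat n m (q0 + s0 * int j) (lone n m q0 s0 c1 j) = lone n m q0 s0 c2 j"
proof -
  define j1 :: nat where "j1 = (if even q0 then 0 else 1)"
  define Q where "Q t = q0 + s0 * int (j1 + 2 * t)" for t
  have Qe: "even (Q t)" for t
  proof -
    have "odd s0" using s0 by auto
    then show ?thesis unfolding Q_def j1_def by (cases "even q0") (simp_all add: algebra_simps)
  qed
  have Qs: "Q (Suc t) = Q t + 2 * s0" for t unfolding Q_def by (simp add: algebra_simps)
  define x where "x t = snd (lone n m q0 s0 c1 (j1 + 2 * t))" for t
  define y where "y t = snd (lone n m q0 s0 c2 (j1 + 2 * t))" for t
  define pp where "pp t = hp (Q t)" for t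
  have step2: "lone n m q0 s0 c (j1 + 2 * Suc t) = Mat n m (Q t + s0) (Mat n m (Q t) (lone n m q0 s0 c (j1 + 2 * t)))" for c t
  proof -
    have e1: "j1 + 2 * Suc t = Suc (Suc (j1 + 2 * t))" by simp
    have e2: "q0 + s0 * int (Suc (j1 + 2 * t)) = Q t + s0" unfolding Q_def by (simp add: algebra_simps)
    have e3: "q0 + s0 * int (j1 + 2 * t) = Q t" unfolding Q_def ..
    show ?thesis unfolding e1 lone.simps e2 e3 ..
  qed
  have oddQ: "odd (Q t + s0)" for t using Qe[of t] s0 by auto
  have xs: "x (Suc t) = sw (pp t) m (x t)" for t
    unfolding x_def pp_def step2 Mat_snd_odd[OF oddQ] Mat_snd_even[OF Qe] ..
  have ys: "y (Suc t) = sw (pp t) m (y t)" for t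
    unfolding y_def pp_def step2 Mat_snd_odd[OF oddQ] Mat_snd_even[OF Qe] ..
  have ppl: "pp t < 2" for t unfolding pp_def by (rule hp_lt)
  have pps: "pp (Suc t) = 1 - pp t" for t unfolding pp_def Qs using hp_alt[OF Qe s0] .
  have g1: "lone n m q0 s0 c1 j1 \<in> grid n m" and g2: "lone n m q0 s0 c2 j1 \<in> grid n m"
    using lone_grid c1 c2 by auto
  have x0: "1 \<le> x 0" "x 0 \<le> m" using g1 unfolding x_def grid_def by (auto simp: mem_Times_iff)
  have y0: "1 \<le> y 0" "y 0 \<le> m" using g2 unfolding y_def grid_def by (auto simp: mem_Times_iff)
  have "lone n m q0 s0 c1 j1 \<noteq> lone n m q0 s0 c2 j1" by (rule lone_inj[OF c1 c2 ne])
  moreover have "fst (lone n m q0 s0 c1 j1) = fst (lone n m q0 s0 c2 j1)" by (rule lone_row[OF row])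
  ultimately have xy0: "x 0 \<noteq> y 0" unfolding x_def y_def by (metis prod.expand add_0_right mult_0_right)
  obtain t where t: "sw (pp t) m (x t) = y t"
    using oned_meet[OF xs x0 ys y0 ppl pps xy0] by blast
  let ?j = "j1 + 2 * t"
  have "Mat n m (Q t) (lone n m q0 s0 c1 ?j) = lone n m q0 s0 c2 ?j"
  proof (rule prod_eqI)
    show "fst (Mat n m (Q t) (lone n m q0 s0 c1 ?j)) = fst (lone n m q0 s0 c2 ?j)"
      unfolding Mat_fst_even[OF Qe] by (rule lone_row[OF row])
    show "snd (Mat n m (Q t) (lone n m q0 s0 c1 ?j)) = snd (lone n m q0 s0 c2 ?j)"
      unfolding Mat_snd_even[OF Qe] using t unfolding x_def y_def pp_def .
  qed
  then show ?thesis unfolding Q_def by blast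
qed

lemma TR_col:
  assumes s0: "s0 = 1 \<or> s0 = -1" and c1: "c1 \<in> grid n m" and c2: "c2 \<in> grid n m"
    and ne: "c1 \<noteq> c2" and col: "snd c1 = snd c2"
  shows "\<exists>j. Mat n m (q0 + s0 * int j) (lone n m q0 s0 c1 j) = lone n m q0 s0 c2 j"
proof -
  define j1 :: nat where "j1 = (if odd q0 then 0 else 1)"
  define Q where "Q t = q0 + s0 * int (j1 + 2 * t)" for t
  have Qe: "odd (Q t)" for t
  proof -
    have "odd s0" using s0 by auto
    then show ?thesis unfolding Q_def j1_def by (cases "even q0") (simp_all add: algebra_simps)
  qed
  have Qs: "Q (Suc t) = Q t + 2 * s0" for t unfolding Q_def by (simp add: algebra_simps)
  define x where "x t = fst (lone n m q0 s0 c1 (j1 + 2 * t))" for t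
  define y where "y t = fst (lone n m q0 s0 c2 (j1 + 2 * t))" for t
  define pp where "pp t = vp (Q t)" for t
  have step2: "lone n m q0 s0 c (j1 + 2 * Suc t) = Mat n m (Q t + s0) (Mat n m (Q t) (lone n m q0 s0 c (j1 + 2 * t)))" for c t
  proof -
    have e1: "j1 + 2 * Suc t = Suc (Suc (j1 + 2 * t))" by simp
    have e2: "q0 + s0 * int (Suc (j1 + 2 * t)) = Q t + s0" unfolding Q_def by (simp add: algebra_simps)
    have e3: "q0 + s0 * int (j1 + 2 * t) = Q t" unfolding Q_def ..
    show ?thesis unfolding e1 lone.simps e2 e3 ..
  qed
  have oddQ: "even (Q t + s0)" for t using Qe[of t] s0 by auto
  have xs: "x (Suc t) = sw (pp t) n (x t)" for t
    unfolding x_def pp_def step2 Mat_fst_even[OF oddQ] Mat_fst_odd[OF Qe] ..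
  have ys: "y (Suc t) = sw (pp t) n (y t)" for t
    unfolding y_def pp_def step2 Mat_fst_even[OF oddQ] Mat_fst_odd[OF Qe] ..
  have ppl: "pp t < 2" for t unfolding pp_def by (rule vp_lt)
  have pps: "pp (Suc t) = 1 - pp t" for t unfolding pp_def Qs using vp_alt[OF Qe s0] .
  have g1: "lone n m q0 s0 c1 j1 \<in> grid n m" and g2: "lone n m q0 s0 c2 j1 \<in> grid n m"
    using lone_grid c1 c2 by auto
  have x0: "1 \<le> x 0" "x 0 \<le> n" using g1 unfolding x_def grid_def by (auto simp: mem_Times_iff)
  have y0: "1 \<le> y 0" "y 0 \<le> n" using g2 unfolding y_def grid_def by (auto simp: mem_Times_iff)
  have "lone n m q0 s0 c1 j1 \<noteq> lone n m q0 s0 c2 j1" by (rule lone_inj[OF c1 c2 ne])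
  moreover have "snd (lone n m q0 s0 c1 j1) = snd (lone n m q0 s0 c2 j1)" by (rule lone_col[OF col])
  ultimately have xy0: "x 0 \<noteq> y 0" unfolding x_def y_def by (metis prod.expand add_0_right mult_0_right)
  obtain t where t: "sw (pp t) n (x t) = y t"
    using oned_meet[OF xs x0 ys y0 ppl pps xy0] by blast
  let ?j = "j1 + 2 * t"
  have "Mat n m (Q t) (lone n m q0 s0 c1 ?j) = lone n m q0 s0 c2 ?j"
  proof (rule prod_eqI)
    show "snd (Mat n m (Q t) (lone n m q0 s0 c1 ?j)) = snd (lone n m q0 s0 c2 ?j)"
      unfolding Mat_snd_odd[OF Qe] by (rule lone_col[OF col])
    show "fst (Mat n m (Q t) (lone n m q0 s0 c1 ?j)) = fst (lone n m q0 s0 c2 ?j)"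
      unfolding Mat_fst_odd[OF Qe] using t unfolding x_def y_def pp_def .
  qed
  then show ?thesis unfolding Q_def by blast
qed




definition Inv2 :: "nat \<Rightarrow> nat \<Rightarrow> config \<Rightarrow> bool" where
  "Inv2 n m s \<longleftrightarrow> wfc n m s \<and> (\<forall>r1 r2 c. r1 \<noteq> r2 \<and> s r1 = Some c \<and> s r2 = Some c \<longrightarrow> False)"

lemma Inv2_wf: "Inv2 n m s \<Longrightarrow> wfc n m s" unfolding Inv2_def by (rule conjunct1)

lemma Inv2D: assumes "Inv2 n m s" "s r1 = Some c" "s r2 = Some c" shows "r1 = r2"
proof (rule ccontr)
  assume ne: "r1 \<noteq> r2"
  have "\<forall>r1 r2 c. r1 \<noteq> r2 \<and> s r1 = Some c \<and> s r2 = Some c \<longrightarrow> False"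
    using assms(1) unfolding Inv2_def by (rule conjunct2)
  then show False using ne assms(2,3) by (elim allE[of _ r1] allE[of _ r2] allE[of _ c]) simp
qed

lemma Inv2I:
  assumes "\<And>r c. s r = Some c \<Longrightarrow> r \<in> grid n m \<and> c \<in> grid n m"
    and "\<And>r1 r2 c. s r1 = Some c \<Longrightarrow> s r2 = Some c \<Longrightarrow> r1 = r2"
  shows "Inv2 n m s"
  unfolding Inv2_def wfc_def using assms by blast

lemma Inv2_step:
  assumes S: "sync_schedule n m f g" and I: "Inv2 n m s"
  shows "Inv2 n m (step n m f g t s)"
proof (rule Inv2I)
  have w: "wfc n m s" by (rule Inv2_wf[OF I])
  fix r c assume h: "step n m f g t s r = Some c"
  then obtain c0 where c0: "s r = Some c0" by (cases "s r") (auto simp: step_none)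
  have g0: "r \<in> grid n m \<and> c0 \<in> grid n m" by (rule wfD[OF w c0])
  have "c = (if Mv n m f g t c0 \<noteq> c0 \<and> \<not> occupied n m s (Mv n m f g t c0) then Mv n m f g t c0 else c0)"
    using h step_char[OF S w c0] by simp
  then show "r \<in> grid n m \<and> c \<in> grid n m" using g0 Mv_grid[of c0 n m f g t] by auto
next
  have w: "wfc n m s" by (rule Inv2_wf[OF I])
  fix r1 r2 c assume h1: "step n m f g t s r1 = Some c" and h2: "step n m f g t s r2 = Some c"
  obtain c1 where c1: "s r1 = Some c1" using h1 by (cases "s r1") (auto simp: step_none)
  obtain c2 where c2: "s r2 = Some c2" using h2 by (cases "s r2") (auto simp: step_none)
  have g1: "r1 \<in> grid n m \<and> c1 \<in> grid n m" by (rule wfD[OF w c1])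
  have g2: "r2 \<in> grid n m \<and> c2 \<in> grid n m" by (rule wfD[OF w c2])
  have o1: "occupied n m s c1" unfolding occupied_def using g1 c1 by blast
  have o2: "occupied n m s c2" unfolding occupied_def using g2 c2 by blast
  define p1 where "p1 = (if Mv n m f g t c1 \<noteq> c1 \<and> \<not> occupied n m s (Mv n m f g t c1) then Mv n m f g t c1 else c1)"
  define p2 where "p2 = (if Mv n m f g t c2 \<noteq> c2 \<and> \<not> occupied n m s (Mv n m f g t c2) then Mv n m f g t c2 else c2)"
  have e1: "c = p1" using h1 step_char[OF S w c1] unfolding p1_def by simp
  have e2: "c = p2" using h2 step_char[OF S w c2] unfolding p2_def by simp
  have "c1 = c2"
  proof (cases "Mv n m f g t c1 \<noteq> c1 \<and> \<not> occupied n m s (Mv n m f g t c1)")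
    case T1: True
    then have q1: "p1 = Mv n m f g t c1" unfolding p1_def by (rule if_P)
    show ?thesis
    proof (cases "Mv n m f g t c2 \<noteq> c2 \<and> \<not> occupied n m s (Mv n m f g t c2)")
      case True
      then have "p2 = Mv n m f g t c2" unfolding p2_def by (rule if_P)
      then have "Mv n m f g t c1 = Mv n m f g t c2" using q1 e1 e2 by simp
      then show ?thesis using Mv_inj g1 g2 by blast
    next
      case False
      then have "p2 = c2" unfolding p2_def by (rule if_not_P)
      then have "Mv n m f g t c1 = c2" using q1 e1 e2 by simp
      then show ?thesis using T1 o2 by simp
    qed
  next
    case F1: False
    then have q1: "p1 = c1" unfolding p1_def by (rule if_not_P)
    show ?thesis
    proof (cases "Mv n m f g t c2 \<noteq> c2 \<and> \<not> occupied n m s (Mv n m f g t c2)")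
      case True
      then have "p2 = Mv n m f g t c2" unfolding p2_def by (rule if_P)
      then have "Mv n m f g t c2 = c1" using q1 e1 e2 by simp
      then show ?thesis using True o1 by simp
    next
      case False
      then have "p2 = c2" unfolding p2_def by (rule if_not_P)
      then show ?thesis using q1 e1 e2 by simp
    qed
  qed
  then show "r1 = r2" using Inv2D[OF I c1] c2 by simp
qed

lemma Inv2_remove:
  assumes I: "Inv2 n m s" shows "Inv2 n m (remove_left S lv k s)"
proof (rule Inv2I)
  fix r c assume "remove_left S lv k s r = Some c"
  then have "s r = Some c" by (rule remove_some)
  then show "r \<in> grid n m \<and> c \<in> grid n m" by (rule wfD[OF Inv2_wf[OF I]])
next
  fix r1 r2 c assume "remove_left S lv k s r1 = Some c" "remove_left S lv k s r2 = Some c"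
  then have "s r1 = Some c" "s r2 = Some c" using remove_some by (metis, metis)
  then show "r1 = r2" by (rule Inv2D[OF I])
qed

lemma run_Inv2:
  assumes S: "sync_schedule n m f g"
  shows "Inv2 n m (run n m f g S0 lv k)"
proof (induction k)
  case 0
  show ?case
  proof (rule Inv2I)
    fix r c assume "run n m f g S0 lv 0 r = Some c"
    then show "r \<in> grid n m \<and> c \<in> grid n m" by (auto simp: remove_left_def split: if_splits)
  next
    fix r1 r2 c assume "run n m f g S0 lv 0 r1 = Some c" "run n m f g S0 lv 0 r2 = Some c"
    then show "r1 = r2" by (auto simp: remove_left_def split: if_splits)
  qed
next
  case (Suc k)
  then show ?case by (simp add: Inv2_remove Inv2_step[OF S])
qed

lemma run_alive:
  assumes r: "r \<in> grid n m" "r \<notin> S0"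
  shows "run n m f g S0 lv k r \<noteq> None"
proof (induction k)
  case 0 then show ?case using r by (simp add: remove_left_def)
next
  case (Suc k)
  then show ?case using r by (auto simp: remove_left_def step_def split: option.splits)
qed

lemma run_dead:
  assumes "r \<in> S0" "lv r \<le> k"
  shows "run n m f g S0 lv k r = None"
  using assms by (cases k) (simp_all add: remove_left_def)

lemma step_nomeet:
  assumes S: "sync_schedule n m f g" and w: "wfc n m s" and nm: "\<not> meet n m f g t s"
  shows "step n m f g t s r = map_option (Mv n m f g t) (s r)"
proof (cases "s r")
  case None then show ?thesis by (simp add: step_none)
next
  case (Some c)
  have g: "r \<in> grid n m \<and> c \<in> grid n m" by (rule wfD[OF w Some])
  have oc: "occupied n m s c" unfolding occupied_def using g Some by blast
  show ?thesis
  proof (cases "Mv n m f g t c = c")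
    case True then show ?thesis using step_char[OF S w Some] Some by simp
  next
    case False
    have "\<not> occupied n m s (Mv n m f g t c)"
    proof
      assume "occupied n m s (Mv n m f g t c)"
      then have "meet n m f g t s" unfolding meet_char[OF S] using g oc False by blast
      then show False using nm by simp
    qed
    then show ?thesis using step_char[OF S w Some] Some False by simp
  qed
qed




lemma card_R:
  assumes n: "1 \<le> n" and m: "1 \<le> m" and nm1: "\<not> (n = 1 \<and> m = 1)"
    and S0: "S0 \<subseteq> grid n m" and cS0: "card S0 = n * m - min n m - 1"
  shows "card (grid n m - S0) = min n m + 1"
proof -
  have le: "min n m + 1 \<le> n * m"
  proof (cases "n \<le> m")
    case True
    then have m2: "2 \<le> m" using n m nm1 by auto
    have a: "n * 2 \<le> n * m" using m2 by simp
    have b: "min n m = n" using True by simp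
    show ?thesis unfolding b using a n by linarith
  next
    case False
    then have n2: "2 \<le> n" using n m nm1 by auto
    have a: "2 * m \<le> n * m" using n2 by simp
    have b: "min n m = m" using False by simp
    show ?thesis unfolding b using a m by linarith
  qed
  have hh: "\<And>a b::nat. b + 1 \<le> a \<Longrightarrow> a - (a - b - 1) = b + 1" by linarith
  have "card (grid n m - S0) = card (grid n m) - card S0"
    by (rule card_Diff_subset[OF finite_subset[OF S0 finite_grid] S0])
  also have "\<dots> = n * m - (n * m - min n m - 1)" using card_grid cS0 by simp
  also have "\<dots> = min n m + 1" by (rule hh[OF le])
  finally show ?thesis .
qed

lemma LB:
  assumes S: "sync_schedule n m f g" and n: "1 \<le> n" and m: "1 \<le> m" and nm1: "\<not> (n = 1 \<and> m = 1)"
    and S0: "S0 \<subseteq> grid n m" and cS0: "card S0 = n * m - min n m - 1"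
  shows "\<not> starvation n m f g S0 lv"
proof
  assume "starvation n m f g S0 lv"
  then obtain K where K: "\<And>k. K \<le> k \<Longrightarrow> \<not> meet n m f g (ev n m f g k) (run n m f g S0 lv k)"
    unfolding starvation_def by blast
  define K' where "K' = K + sum lv S0"
  have fS0: "finite S0" using finite_subset[OF S0 finite_grid] .
  have lvle: "lv r \<le> K'" if r: "r \<in> S0" for r
  proof -
    have "lv r \<le> sum lv S0" by (rule member_le_sum[OF r _ fS0]) simp
    then show ?thesis unfolding K'_def by simp
  qed
  have s0: "g (1,1) = 1 \<or> g (1,1) = -1" by (rule g11[OF S n m])
  obtain e where e: "e \<in> event_times n m f g" using ET_nonempty[OF S n m nm1] by blast
  have evin: "\<And>k. ev n m f g k \<in> event_times n m f g" by (rule ev_in[OF S s0 e])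
  have evlt: "\<And>k. ev n m f g k < ev n m f g (Suc k)" by (rule ev_lt[OF S s0 e])
  have evmin: "\<And>k t. t \<in> event_times n m f g \<Longrightarrow> ev n m f g k < t \<Longrightarrow> ev n m f g (Suc k) \<le> t"
    by (rule ev_min[OF S s0 e])
  have ev0: "\<And>k. 0 \<le> ev n m f g k" using evin unfolding event_times_def by blast
  have runS: "run n m f g S0 lv (Suc k) r = map_option (Mv n m f g (ev n m f g k)) (run n m f g S0 lv k r)"
    if k: "K' \<le> k" for k r
  proof -
    have w: "wfc n m (run n m f g S0 lv k)" by (rule Inv2_wf[OF run_Inv2[OF S]])
    have nmk: "\<not> meet n m f g (ev n m f g k) (run n m f g S0 lv k)" using K k unfolding K'_def by simp
    have st: "step n m f g (ev n m f g k) (run n m f g S0 lv k) r = map_option (Mv n m f g (ev n m f g k)) (run n m f g S0 lv k r)"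
      by (rule step_nomeet[OF S w nmk])
    show ?thesis
    proof (cases "r \<in> S0 \<and> lv r \<le> Suc k")
      case True
      then have "lv r \<le> k" using lvle k by (meson le_trans)
      then have "run n m f g S0 lv k r = None" using True run_dead by blast
      then show ?thesis using True by (simp add: remove_left_def)
    next
      case False then show ?thesis using st False by (auto simp add: remove_left_def)
    qed
  qed
  define R where "R = grid n m - S0"
  have cR: "card R = min n m + 1" unfolding R_def by (rule card_R[OF n m nm1 S0 cS0])
  have fR: "finite R" unfolding R_def using finite_grid by simp
  have RG: "R \<subseteq> grid n m" unfolding R_def by blast
  define pos where "pos r = the (run n m f g S0 lv K' r)" for r
  have posE: "run n m f g S0 lv K' r = Some (pos r)" if r: "r \<in> R" for r
  proof -
    have "run n m f g S0 lv K' r \<noteq> None" using r run_alive unfolding R_def by blast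
    then show ?thesis unfolding pos_def by auto
  qed
  have posG: "pos r \<in> grid n m" if r: "r \<in> R" for r
    using wfD[OF Inv2_wf[OF run_Inv2[OF S]] posE[OF r]] by (rule conjunct2)
  have posI: "r1 = r2" if "r1 \<in> R" "r2 \<in> R" "pos r1 = pos r2" for r1 r2
    using Inv2D[OF run_Inv2[OF S] posE[OF that(1)]] posE[OF that(2)] that(3) by simp
  obtain r1 r2 where r12: "r1 \<in> R" "r2 \<in> R" "r1 \<noteq> r2"
    and rc: "fst (pos r1) = fst (pos r2) \<or> snd (pos r1) = snd (pos r2)"
  proof (cases "n \<le> m")
    case True
    have "\<not> inj_on (\<lambda>r. fst (pos r)) R"
    proof
      assume inj: "inj_on (\<lambda>r. fst (pos r)) R"
      have "(\<lambda>r. fst (pos r)) ` R \<subseteq> {1..n}" using posG unfolding grid_def by (auto simp: mem_Times_iff)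
      then have "card ((\<lambda>r. fst (pos r)) ` R) \<le> card {1..n}" by (rule card_mono[OF finite_atLeastAtMost])
      then have "card R \<le> n" using card_image[OF inj] by simp
      then show False using cR True by simp
    qed
    then obtain a b where "a \<in> R" "b \<in> R" "a \<noteq> b" "fst (pos a) = fst (pos b)" unfolding inj_on_def by blast
    then show ?thesis using that by blast
  next
    case False
    have "\<not> inj_on (\<lambda>r. snd (pos r)) R"
    proof
      assume inj: "inj_on (\<lambda>r. snd (pos r)) R"
      have "(\<lambda>r. snd (pos r)) ` R \<subseteq> {1..m}" using posG unfolding grid_def by (auto simp: mem_Times_iff)
      then have "card ((\<lambda>r. snd (pos r)) ` R) \<le> card {1..m}" by (rule card_mono[OF finite_atLeastAtMost])
      then have "card R \<le> m" using card_image[OF inj] by simp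
      then show False using cR False by simp
    qed
    then obtain a b where "a \<in> R" "b \<in> R" "a \<noteq> b" "snd (pos a) = snd (pos b)" unfolding inj_on_def by blast
    then show ?thesis using that by blast
  qed
  define c1 where "c1 = pos r1"
  define c2 where "c2 = pos r2"
  have c1G: "c1 \<in> grid n m" unfolding c1_def by (rule posG[OF r12(1)])
  have c2G: "c2 \<in> grid n m" unfolding c2_def by (rule posG[OF r12(2)])
  have c12: "c1 \<noteq> c2" unfolding c1_def c2_def using posI r12 by blast
  obtain qK where qK: "theta f g (ev n m f g K') = of_int qK * pi / 2"
    using ET_isq[OF S evin[of K']] unfolding isq_def by blast
  define tau where "tau j = ev n m f g K' + of_nat j / 4" for j :: nat
  have thetatau: "theta f g (tau j) = of_int (qK + g (1,1) * int j) * pi / 2" for j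
    unfolding tau_def theta_shift qK by (simp add: algebra_simps)
  have Mvtau: "Mv n m f g (tau j) c = Mat n m (qK + g (1,1) * int j) c" for j c
    by (rule Mv_q[OF thetatau])
  have notET: "\<forall>c\<in>grid n m. Mv n m f g (tau j) c = c"
    if "ev n m f g k < tau j" "tau j < ev n m f g (Suc k)" for j k
  proof -
    have "tau j \<notin> event_times n m f g" using evmin[of "tau j" k] that by linarith
    moreover have "0 \<le> tau j" using ev0[of K'] unfolding tau_def by simp
    ultimately show ?thesis using ET_iff[OF S] by auto
  qed
  have bridge: "\<exists>k\<ge>K'. ev n m f g k \<le> tau j \<and> tau j < ev n m f g (Suc k) \<and>
      (ev n m f g k = tau j \<longrightarrow> (\<forall>r\<in>R. run n m f g S0 lv k r = Some (lone n m qK (g (1,1)) (pos r) j))) \<and>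
      (ev n m f g k < tau j \<longrightarrow> (\<forall>r\<in>R. run n m f g S0 lv (Suc k) r = Some (lone n m qK (g (1,1)) (pos r) j)))" for j
  proof (induction j)
    case 0
    have "tau 0 = ev n m f g K'" unfolding tau_def by simp
    then show ?case using posE evlt[of K'] by (intro exI[of _ K']) auto
  next
    case (Suc j)
    then obtain k where k: "K' \<le> k" "ev n m f g k \<le> tau j" "tau j < ev n m f g (Suc k)"
      and h1: "ev n m f g k = tau j \<longrightarrow> (\<forall>r\<in>R. run n m f g S0 lv k r = Some (lone n m qK (g (1,1)) (pos r) j))"
      and h2: "ev n m f g k < tau j \<longrightarrow> (\<forall>r\<in>R. run n m f g S0 lv (Suc k) r = Some (lone n m qK (g (1,1)) (pos r) j))"
      by blast
    have A: "\<forall>r\<in>R. run n m f g S0 lv (Suc k) r = Some (lone n m qK (g (1,1)) (pos r) (Suc j))"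
    proof
      fix r assume r: "r \<in> R"
      have lg: "lone n m qK (g (1,1)) (pos r) j \<in> grid n m" by (rule lone_grid[OF posG[OF r]])
      show "run n m f g S0 lv (Suc k) r = Some (lone n m qK (g (1,1)) (pos r) (Suc j))"
      proof (cases "ev n m f g k = tau j")
        case True
        have "run n m f g S0 lv (Suc k) r = map_option (Mv n m f g (ev n m f g k)) (run n m f g S0 lv k r)"
          by (rule runS[OF k(1)])
        also have "\<dots> = Some (Mv n m f g (tau j) (lone n m qK (g (1,1)) (pos r) j))" using h1 True r by simp
        also have "\<dots> = Some (lone n m qK (g (1,1)) (pos r) (Suc j))" unfolding Mvtau by simp
        finally show ?thesis .
      next
        case False
        then have lt: "ev n m f g k < tau j" using k(2) by simp
        have "Mv n m f g (tau j) (lone n m qK (g (1,1)) (pos r) j) = lone n m qK (g (1,1)) (pos r) j"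
          using notET[OF lt k(3)] lg by blast
        then have "lone n m qK (g (1,1)) (pos r) (Suc j) = lone n m qK (g (1,1)) (pos r) j"
          unfolding Mvtau by simp
        then show ?thesis using h2 lt r by simp
      qed
    qed
    have B: "tau (Suc j) \<le> ev n m f g (Suc k)"
    proof -
      obtain z :: int where z: "ev n m f g (Suc k) = ev n m f g K' + of_int z / 4"
        using ET_quarter[OF S s0 evin evin] by blast
      have "real j < real_of_int z" using k(3) z unfolding tau_def by simp
      then have "int j < z" by linarith
      then have "real j + 1 \<le> real_of_int z" by linarith
      then show ?thesis using z unfolding tau_def by simp
    qed
    have C: "ev n m f g k < tau (Suc j)" using k(2) unfolding tau_def by (simp add: field_simps)
    show ?case
    proof (cases "ev n m f g (Suc k) = tau (Suc j)")
      case True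
      then show ?thesis using A evlt[of "Suc k"] k(1) by (intro exI[of _ "Suc k"]) auto
    next
      case False
      then have "tau (Suc j) < ev n m f g (Suc k)" using B by simp
      then show ?thesis using A C k(1) by (intro exI[of _ k]) auto
    qed
  qed
  obtain j where tj: "Mat n m (qK + g (1,1) * int j) (lone n m qK (g (1,1)) c1 j) = lone n m qK (g (1,1)) c2 j"
    using rc TR_row[OF s0 c1G c2G c12] TR_col[OF s0 c1G c2G c12] unfolding c1_def c2_def by blast
  have ne: "lone n m qK (g (1,1)) c1 j \<noteq> lone n m qK (g (1,1)) c2 j" by (rule lone_inj[OF c1G c2G c12])
  obtain k where k: "K' \<le> k" "ev n m f g k \<le> tau j" "tau j < ev n m f g (Suc k)"
    and h1: "ev n m f g k = tau j \<longrightarrow> (\<forall>r\<in>R. run n m f g S0 lv k r = Some (lone n m qK (g (1,1)) (pos r) j))"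
    using bridge[of j] by blast
  show False
  proof (cases "ev n m f g k = tau j")
    case True
    have x1: "run n m f g S0 lv k r1 = Some (lone n m qK (g (1,1)) c1 j)" using h1 True r12 unfolding c1_def by blast
    have x2: "run n m f g S0 lv k r2 = Some (lone n m qK (g (1,1)) c2 j)" using h1 True r12 unfolding c2_def by blast
    have o1: "occupied n m (run n m f g S0 lv k) (lone n m qK (g (1,1)) c1 j)"
      unfolding occupied_def using x1 r12 RG by blast
    have o2: "occupied n m (run n m f g S0 lv k) (lone n m qK (g (1,1)) c2 j)"
      unfolding occupied_def using x2 r12 RG by blast
    have mv: "Mv n m f g (ev n m f g k) (lone n m qK (g (1,1)) c1 j) = lone n m qK (g (1,1)) c2 j"
      using True Mvtau tj by simp
    have "meet n m f g (ev n m f g k) (run n m f g S0 lv k)"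
      unfolding meet_char[OF S] using lone_grid[OF c1G] o1 o2 mv ne by (intro bexI[of _ "lone n m qK (g (1,1)) c1 j"]) auto
    then show False using K k(1) unfolding K'_def by simp
  next
    case False
    then have lt: "ev n m f g k < tau j" using k(2) by simp
    have "Mv n m f g (tau j) (lone n m qK (g (1,1)) c1 j) = lone n m qK (g (1,1)) c1 j"
      using notET[OF lt k(3)] lone_grid[OF c1G] by blast
    then show False using tj ne Mvtau by simp
  qed
qed

theorem theorem11:
  fixes n m :: nat and f :: "cell \<Rightarrow> real" and g :: "cell \<Rightarrow> int"
  assumes "n \<ge> 1" and "m \<ge> 1" and "sync_schedule n m f g"
  shows "isolation_resilience n m f g = int (n * m) - int (min n m) - 1"
proof -
  note n = assms(1) and m = assms(2) and S = assms(3)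
  define T where "T = int (n * m) - int (min n m) - 1"
  have minle: "min n m \<le> n * m"
  proof -
    have a: "n * 1 \<le> n * m" using m by (rule mult_le_mono2)
    have "min n m \<le> n" by simp
    then show ?thesis using a by linarith
  qed
  have PT: "T = -1 \<or> (0 \<le> T \<and> T \<le> int (n * m) \<and> resilient_to n m f g (nat T))"
  proof (cases "n = 1 \<and> m = 1")
    case True then show ?thesis unfolding T_def by simp
  next
    case False
    have le: "min n m + 1 \<le> n * m"
    proof (cases "n \<le> m")
      case True
      then have m2: "2 \<le> m" using n m False by auto
      have a: "n * 2 \<le> n * m" using m2 by simp
      have b: "min n m = n" using True by simp
      show ?thesis unfolding b using a n by linarith
    next
      case F2: False
      then have n2: "2 \<le> n" using n m False by auto
      have a: "2 * m \<le> n * m" using n2 by simp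
      have b: "min n m = m" using F2 by simp
      show ?thesis unfolding b using a m by linarith
    qed
    have T0: "0 \<le> T" unfolding T_def using le by linarith
    have natT: "nat T = n * m - min n m - 1" unfolding T_def using le by linarith
    have "resilient_to n m f g (nat T)"
      unfolding resilient_to_def natT using LB[OF S n m False] by blast
    then show ?thesis using T0 unfolding T_def by simp
  qed
  have upper: "y \<le> T" if Py: "y = -1 \<or> (0 \<le> y \<and> y \<le> int (n * m) \<and> resilient_to n m f g (nat y))" for y
  proof (cases "y = -1")
    case True
    have mi: "int (min n m) \<le> int (n * m)" using minle by (simp only: of_nat_le_iff)
    show ?thesis unfolding T_def using True mi by linarith
  next
    case False
    then have y: "0 \<le> y" "y \<le> int (n * m)" "resilient_to n m f g (nat y)" using Py by auto
    show ?thesis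
    proof (rule ccontr)
      assume "\<not> y \<le> T"
      then have "n * m - min n m \<le> nat y" "nat y \<le> n * m" unfolding T_def using y(1,2) minle by linarith+
      then have "\<not> resilient_to n m f g (nat y)" by (rule UB[OF S])
      then show False using y(3) by simp
    qed
  qed
  have "isolation_resilience n m f g = T"
    unfolding isolation_resilience_def 
    by (rule Greatest_equality[where P = "\<lambda>k. k = -1 \<or> (0 \<le> k \<and> k \<le> int (n * m) \<and> resilient_to n m f g (nat k))", OF PT upper])
  then show ?thesis unfolding T_def .
qed


end
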